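(* Let $z>0$, $\zeta=(z/2)^{1/3}$. Let $(\sigma_n)_{n\in\mathbb Z}$ be functions of $z$ satisfying, for all $n\in\mathbb Z$, $$\sigma_{n+1}\sigma_{n-1}=\sqrt3\Big(z\big((\sigma_n')^2-\sigma_n\sigma_n''\big)-\sigma_n\sigma_n'\Big)\qquad(\,'=\mathrm d/\mathrm dz),$$ with $\sigma_0=\zeta^{-5/24}e^{-\frac98\zeta^4}$ and $\sigma_1=3^{1/4}\zeta^{7/24}e^{-\frac98\zeta^4-\frac32\zeta^2}$. Then for all $n\in\mathbb Z$, $$\sigma_n=\begin{cases}3^{1/4}\zeta^{7/24}e^{-\frac98\zeta^4-\frac32n\zeta^2}\rho_n(3\zeta^2),& n\text{ odd},\\ \zeta^{-5/24}e^{-\frac98\zeta^4-\frac32n\zeta^2}\rho_n(3\zeta^2),& n\text{ even},\end{cases}$$ where $\rho_n$ are the Ohyama polynomials.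
   Context: The Ohyama polynomials $\rho_n(s)$, $n\in\mathbb Z$, are defined by $\rho_0=\rho_1=\rho_{-1}=1$ and the recurrence $$(s+n)\rho_n^2-2s\rho_n\ddot\rho_n+2s(\dot\rho_n)^2-2\rho_n\dot\rho_n=\begin{cases}\rho_{n+1}\rho_{n-1},& n\text{ odd},\\ s\,\rho_{n+1}\rho_{n-1},& n\text{ even},\end{cases}$$ where dots denote $\mathrm d/\mathrm ds$ (it is known that each $\rho_n$ is a monic polynomial in $s$ with integer coefficients and $\rho_n(0)\ne0$). *)

theory Defs
  imports "HOL-Analysis.Analysis" "HOL-Computational_Algebra.Polynomial"
begin

definition ohyama_lhs :: "int \<Rightarrow> real poly \<Rightarrow> real poly" where
  "ohyama_lhs n p =
     [:of_int n, 1:] * p^2 - smult 2 ([:0, 1:] * p * pderiv (pderiv p))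
     + smult 2 ([:0, 1:] * (pderiv p)^2) - smult 2 (p * pderiv p)"

text \<open>Upward recursion: ohyama_up k = (rho_k, rho_(k+1)).
  From the recurrence at n = k+1: rho_(n+1) = lhs_n(rho_n) / rho_(n-1) (n odd),
  resp. / (s * rho_(n-1)) (n even).\<close>
fun ohyama_up :: "nat \<Rightarrow> real poly \<times> real poly" where
  "ohyama_up 0 = (1, 1)"
| "ohyama_up (Suc k) =
     (let (a, b) = ohyama_up k; n = int (Suc k)
      in (b, ohyama_lhs n b div (if odd n then a else [:0, 1:] * a)))"

text \<open>Downward recursion: ohyama_down k = (rho_(-k), rho_(-k-1)).
  From the recurrence at n = -(k+1): rho_(n-1) = lhs_n(rho_n) / rho_(n+1) (n odd),
  resp. / (s * rho_(n+1)) (n even).\<close>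
fun ohyama_down :: "nat \<Rightarrow> real poly \<times> real poly" where
  "ohyama_down 0 = (1, 1)"
| "ohyama_down (Suc k) =
     (let (a, b) = ohyama_down k; n = - int (Suc k)
      in (b, ohyama_lhs n b div (if odd n then a else [:0, 1:] * a)))"

definition ohyama :: "int \<Rightarrow> real poly" where
  "ohyama n = (if n \<ge> 0 then fst (ohyama_up (nat n)) else fst (ohyama_down (nat (- n))))"

end

theory Submission
  imports Defs "HOL-Computational_Algebra.Computational_Algebra"
begin


definition cc :: "nat \<Rightarrow> real poly" where
  "cc j = (if odd j then 1 else [:0,1:])"

fun sq :: "int \<Rightarrow> nat \<Rightarrow> real poly" where
  "sq \<epsilon> 0 = 1"
| "sq \<epsilon> (Suc 0) = 1"
| "sq \<epsilon> (Suc (Suc k)) = ohyama_lhs (\<epsilon> * int (Suc k)) (sq \<epsilon> (Suc k)) div (cc (Suc k) * sq \<epsilon> k)"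

lemma up_sq: "ohyama_up k = (sq 1 k, sq 1 (Suc k))"
proof (induction k)
  case 0 then show ?case by simp
next
  case (Suc k)
  show ?case using Suc by (cases k) (auto simp: cc_def Let_def)
qed

lemma down_sq: "ohyama_down k = (sq (-1) k, sq (-1) (Suc k))"
proof (induction k)
  case 0 then show ?case by simp
next
  case (Suc k)
  show ?case using Suc by (cases k) (auto simp: cc_def Let_def)
qed

lemma ohyama_sq: "ohyama n = (if n \<ge> 0 then sq 1 (nat n) else sq (-1) (nat (-n)))"
  by (simp add: ohyama_def up_sq down_sq)


definition ee :: "nat \<Rightarrow> real" where
  "ee j = (if even j then 3 * real j + 1 else 3 * real j + 2)"

definition Tr :: "int \<Rightarrow> nat \<Rightarrow> real poly \<Rightarrow> real poly \<Rightarrow> real poly \<Rightarrow> bool" where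
  "Tr \<epsilon> j qm q qp \<longleftrightarrow> ohyama_lhs (\<epsilon> * int j) q = cc j * qp * qm"

definition Bexp :: "int \<Rightarrow> nat \<Rightarrow> real poly \<Rightarrow> real poly \<Rightarrow> real poly" where
  "Bexp \<epsilon> j q0 q1 = [:of_int \<epsilon> * ee j, 1:] * q1 * q0
      - smult (2 * of_int \<epsilon>) ([:0,1:] * (pderiv q1 * q0 - q1 * pderiv q0))"

definition Br :: "int \<Rightarrow> nat \<Rightarrow> real poly \<Rightarrow> real poly \<Rightarrow> real poly \<Rightarrow> real poly \<Rightarrow> bool" where
  "Br \<epsilon> j qm q0 q1 q2 \<longleftrightarrow> q2 * qm = Bexp \<epsilon> j q0 q1"

lemma poly_lhs: "poly (ohyama_lhs n p) x =
   (x + of_int n) * (poly p x)^2 - 2 * x * poly p x * poly (pderiv (pderiv p)) x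
   + 2 * x * (poly (pderiv p) x)^2 - 2 * poly p x * poly (pderiv p) x"
  by (simp add: ohyama_lhs_def algebra_simps)

lemma poly_Bexp: "poly (Bexp \<epsilon> j q0 q1) x = (x + of_int \<epsilon> * ee j) * poly q1 x * poly q0 x
   - 2 * of_int \<epsilon> * x * (poly (pderiv q1) x * poly q0 x - poly q1 x * poly (pderiv q0) x)"
  by (simp add: Bexp_def algebra_simps)

lemma poly_cc: "poly (cc j) x = (if odd j then 1 else x)"
  by (simp add: cc_def)

definition phi :: "real poly \<Rightarrow> real \<Rightarrow> real" where
  "phi q x = poly (pderiv q) x / poly q x"
definition psi :: "real poly \<Rightarrow> real \<Rightarrow> real" where
  "psi q x = poly (pderiv (pderiv q)) x / poly q x - (phi q x)^2"
definition tt :: "real poly \<Rightarrow> real poly \<Rightarrow> real poly \<Rightarrow> real \<Rightarrow> real" where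
  "tt qm q qp x = poly qp x * poly qm x / (poly q x)^2"

lemma DERIV_phi: "poly q x \<noteq> 0 \<Longrightarrow> (phi q has_real_derivative psi q x) (at x)"
  unfolding phi_def psi_def
  apply (rule derivative_eq_intros poly_DERIV refl | assumption)+
  apply (simp add: field_simps power2_eq_square)
  done

lemma DERIV_tt: "poly q x \<noteq> 0 \<Longrightarrow> poly qm x \<noteq> 0 \<Longrightarrow> poly qp x \<noteq> 0 \<Longrightarrow>
  (tt qm q qp has_real_derivative tt qm q qp x * (phi qp x + phi qm x - 2 * phi q x)) (at x)"
  unfolding tt_def phi_def
  apply (rule derivative_eq_intros poly_DERIV refl | simp)+
  apply (simp add: field_simps power2_eq_square eval_nat_numeral)
  done

lemma Tr_point:
  assumes "Tr \<epsilon> j qm q qp" "poly q x \<noteq> 0"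
  shows "poly (cc j) x * tt qm q qp x = x + of_int \<epsilon> * real j - 2 * x * psi q x - 2 * phi q x"
proof -
  have "poly (ohyama_lhs (\<epsilon> * int j) q) x = poly (cc j) x * poly qp x * poly qm x"
    using assms(1) unfolding Tr_def by simp
  then show ?thesis using assms(2) unfolding poly_lhs tt_def phi_def psi_def
    by (simp add: field_simps power2_eq_square)
qed

lemma Br_point:
  assumes "Br \<epsilon> j qm q0 q1 q2" "poly q0 x \<noteq> 0" "poly q1 x \<noteq> 0" "poly qm x \<noteq> 0"
  shows "tt q0 q1 q2 x * tt qm q0 q1 x = x + of_int \<epsilon> * ee j - 2 * of_int \<epsilon> * x * (phi q1 x - phi q0 x)"
proof -
  have "poly q2 x * poly qm x = poly (Bexp \<epsilon> j q0 q1) x"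
    using assms(1) unfolding Br_def by (metis poly_mult)
  then show ?thesis using assms(2-4) unfolding poly_Bexp tt_def phi_def
    by (simp add: field_simps power2_eq_square)
qed

lemma deriv_eq_open:
  assumes "open U" "x \<in> U" "\<And>y. y \<in> U \<Longrightarrow> f y = g y"
    "(f has_real_derivative f') (at x)" "(g has_real_derivative g') (at x)"
  shows "f' = g'"
proof -
  have "(g has_real_derivative f') (at x)"
    using has_field_derivative_transform_within_open[OF assms(4) assms(1) assms(2)] assms(3) by auto
  then show ?thesis using assms(5) DERIV_unique by blast
qed


lemma core_R:
  fixes z \<epsilon> \<alpha> \<beta> \<alpha>1 \<beta>1 Gg Hh a b A1 A2 l l1 pp Sp :: real
  assumes eps: "\<epsilon> = 1 \<or> \<epsilon> = -1" and nz: "a \<noteq> 0" "b \<noteq> 0" "z \<noteq> 0"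
    and par: "(\<alpha> = z \<and> \<beta> = 1 \<and> \<alpha>1 = 1 \<and> \<beta>1 = 0 \<and> Hh = 4 \<and> Gg = 2) \<or>
              (\<alpha> = 1 \<and> \<beta> = z \<and> \<alpha>1 = 0 \<and> \<beta>1 = 1 \<and> Hh = 2 \<and> Gg = 4)"
    and L: "l = \<epsilon> * (\<alpha>/a - \<beta>/b) - A1"
    and L1: "l1 = \<epsilon> * (\<alpha>1/a - \<alpha>*A1/a - \<beta>1/b + \<beta>*l/b) - A2"
    and P: "a*b - a*pp = \<epsilon>*Hh - 2*\<epsilon>*z*A1"
    and P1: "a*b*(A1+l) - a*pp*(A1+Sp) = -2*\<epsilon>*(A1 + z*A2)"
    and Q2: "\<beta>*a - \<alpha>*pp = \<epsilon>*a*pp*(A1+Sp)"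
  shows "b*(2*\<alpha>*b - \<beta>*a - 2*l - 2*z*l1) = \<beta>*(a*b + \<epsilon>*Gg - 2*\<epsilon>*z*l)"
proof -
  have ee: "\<epsilon>*\<epsilon> = 1" using eps by auto
  have X: "a*pp = a*b - \<epsilon>*Hh + 2*\<epsilon>*z*A1" using P by simp
  have Q2': "a*pp*(A1+Sp) = \<epsilon>*(\<beta>*a - \<alpha>*pp)" using Q2 ee
    by (metis mult.assoc mult.left_commute mult_1)
  have pp: "pp = (a*b - \<epsilon>*Hh + 2*\<epsilon>*z*A1)/a" using X nz by (simp add: field_simps)
  have S: "A2 = (-2*\<epsilon>*A1 - a*b*(A1+l) + \<epsilon>*(\<beta>*a - \<alpha>*pp)) / (2*\<epsilon>*z)"
    using P1 Q2' nz ee eps by (auto simp: field_simps)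
  show ?thesis
    using eps par nz unfolding L1 S pp L
    by (auto simp: field_simps) (simp_all add: algebra_simps)?
qed

lemma lhs_point: "poly q x \<noteq> 0 \<Longrightarrow>
  poly (ohyama_lhs n q) x / (poly q x)^2 = x + of_int n - 2 * x * psi q x - 2 * phi q x"
  unfolding poly_lhs phi_def psi_def by (simp add: field_simps power2_eq_square)

lemma Bexp_point: "poly q0 x \<noteq> 0 \<Longrightarrow> poly q1 x \<noteq> 0 \<Longrightarrow>
  poly (Bexp \<epsilon> j q0 q1) x / (poly q1 x * poly q0 x) = x + of_int \<epsilon> * ee j - 2 * of_int \<epsilon> * x * (phi q1 x - phi q0 x)"
  unfolding poly_Bexp phi_def by (simp add: field_simps)

lemma ee_diff: "ee (Suc j) - ee j = (if even j then 4 else 2)"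
  by (simp add: ee_def)

lemma step_point:
  fixes \<epsilon> :: int and j :: nat and q0 q1 q2 q3 q4 :: "real poly"
  assumes eps: "\<epsilon> = 1 \<or> \<epsilon> = -1"
    and U: "open U" "x \<in> U"
    and Upos: "\<And>y. y \<in> U \<Longrightarrow> y > 0 \<and> poly q0 y \<noteq> 0 \<and> poly q1 y \<noteq> 0 \<and> poly q2 y \<noteq> 0 \<and> poly q3 y \<noteq> 0 \<and> poly q4 y \<noteq> 0"
    and T0: "Tr \<epsilon> j q0 q1 q2" and T1: "Tr \<epsilon> (j+1) q1 q2 q3" and T2: "Tr \<epsilon> (j+2) q2 q3 q4"
    and B0: "Br \<epsilon> j q0 q1 q2 q3" and B1: "Br \<epsilon> (j+1) q1 q2 q3 q4"
  shows "poly (ohyama_lhs (\<epsilon> * int (j+3)) q4) x * poly q2 x = poly (cc (j+3)) x * poly q3 x * poly (Bexp \<epsilon> (j+2) q3 q4) x"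
proof -
  define e where "e = (of_int \<epsilon> :: real)"
  have e: "e = 1 \<or> e = -1" using eps by (auto simp: e_def)
  have ee1: "e * e = 1" using e by auto
  have eeX: "\<And>X. e * (e * X) = X" using ee1 by (metis mult.assoc mult_1)
  define p where "p = tt q0 q1 q2"
  define a where "a = tt q1 q2 q3"
  define b where "b = tt q2 q3 q4"
  define al where "al = poly (cc j)"
  define be where "be = poly (cc (j+1))"
  have al2: "poly (cc (j+2)) = al" by (simp add: al_def cc_def)
  have be3: "poly (cc (j+3)) = be" by (simp add: be_def cc_def)
  have nzU: "\<And>y. y \<in> U \<Longrightarrow> poly q0 y \<noteq> 0 \<and> poly q1 y \<noteq> 0 \<and> poly q2 y \<noteq> 0 \<and> poly q3 y \<noteq> 0 \<and> poly q4 y \<noteq> 0"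
    using Upos by blast
  have tnz: "\<And>y. y \<in> U \<Longrightarrow> a y \<noteq> 0 \<and> b y \<noteq> 0 \<and> p y \<noteq> 0"
    using nzU by (simp add: a_def b_def p_def tt_def)
  have TT0: "\<And>y. y \<in> U \<Longrightarrow> al y * p y = y + e * real j - 2 * y * psi q1 y - 2 * phi q1 y"
    using Tr_point[OF T0] nzU unfolding al_def p_def e_def by blast
  have TT1: "\<And>y. y \<in> U \<Longrightarrow> be y * a y = y + e * real (j+1) - 2 * y * psi q2 y - 2 * phi q2 y"
    using Tr_point[OF T1] nzU unfolding be_def a_def e_def by blast
  have TT2: "\<And>y. y \<in> U \<Longrightarrow> al y * b y = y + e * real (j+2) - 2 * y * psi q3 y - 2 * phi q3 y"
    using Tr_point[OF T2] nzU al2 unfolding b_def e_def by metis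
  have BB0: "\<And>y. y \<in> U \<Longrightarrow> a y * p y = y + e * ee j - 2 * e * y * (phi q2 y - phi q1 y)"
    using Br_point[OF B0] nzU unfolding a_def p_def e_def by blast
  have BB1: "\<And>y. y \<in> U \<Longrightarrow> b y * a y = y + e * ee (j+1) - 2 * e * y * (phi q3 y - phi q2 y)"
    using Br_point[OF B1] nzU unfolding a_def b_def e_def by blast
  have dphi: "\<And>q y. poly q y \<noteq> 0 \<Longrightarrow> (phi q has_real_derivative psi q y) (at y)"
    by (rule DERIV_phi)
  have xnz: "poly q0 x \<noteq> 0" "poly q1 x \<noteq> 0" "poly q2 x \<noteq> 0" "poly q3 x \<noteq> 0" "poly q4 x \<noteq> 0" "x > 0"
    using Upos[OF U(2)] by auto
  have dps: "(phi q0 has_real_derivative psi q0 x) (at x)" "(phi q1 has_real_derivative psi q1 x) (at x)"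
    "(phi q2 has_real_derivative psi q2 x) (at x)" "(phi q3 has_real_derivative psi q3 x) (at x)"
    "(phi q4 has_real_derivative psi q4 x) (at x)"
    using dphi xnz by blast+
  have da: "(a has_real_derivative a x * (phi q3 x + phi q1 x - 2 * phi q2 x)) (at x)"
    unfolding a_def using DERIV_tt xnz by blast
  have db: "(b has_real_derivative b x * (phi q4 x + phi q2 x - 2 * phi q3 x)) (at x)"
    unfolding b_def using DERIV_tt xnz by blast
  have dp: "(p has_real_derivative p x * (phi q2 x + phi q0 x - 2 * phi q1 x)) (at x)"
    unfolding p_def using DERIV_tt xnz by blast
  have dpsy: "\<And>q y. y \<in> U \<Longrightarrow> poly q y \<noteq> 0 \<Longrightarrow> (phi q has_real_derivative psi q y) (at y)"
    using dphi by blast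
  have BB0': "a y * p y * ((phi q3 y + phi q1 y - 2 * phi q2 y) + (phi q2 y + phi q0 y - 2 * phi q1 y))
      = 1 - 2 * e * (phi q2 y - phi q1 y) - 2 * e * y * (psi q2 y - psi q1 y)" if y: "y \<in> U" for y
  proof -
    have ynz: "poly q0 y \<noteq> 0" "poly q1 y \<noteq> 0" "poly q2 y \<noteq> 0" "poly q3 y \<noteq> 0" "poly q4 y \<noteq> 0"
      using Upos[OF y] by auto
    have dps: "(phi q1 has_real_derivative psi q1 y) (at y)" "(phi q2 has_real_derivative psi q2 y) (at y)"
      using dphi ynz by blast+
    have da: "(a has_real_derivative a y * (phi q3 y + phi q1 y - 2 * phi q2 y)) (at y)"
      unfolding a_def using DERIV_tt ynz by blast
    have dp: "(p has_real_derivative p y * (phi q2 y + phi q0 y - 2 * phi q1 y)) (at y)"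
      unfolding p_def using DERIV_tt ynz by blast
    show ?thesis
    proof (rule deriv_eq_open[OF U(1) y BB0])
      show "((\<lambda>y. a y * p y) has_real_derivative a y * p y * ((phi q3 y + phi q1 y - 2 * phi q2 y) + (phi q2 y + phi q0 y - 2 * phi q1 y))) (at y)"
        by (rule derivative_eq_intros da dp | simp add: algebra_simps)+
      show "((\<lambda>y. y + e * ee j - 2 * e * y * (phi q2 y - phi q1 y)) has_real_derivative
         1 - 2 * e * (phi q2 y - phi q1 y) - 2 * e * y * (psi q2 y - psi q1 y)) (at y)"
        by (rule DERIV_cong, (rule derivative_intros dps)+, simp add: algebra_simps)
    qed
  qed
  have BB1': "b y * a y * ((phi q4 y + phi q2 y - 2 * phi q3 y) + (phi q3 y + phi q1 y - 2 * phi q2 y))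
      = 1 - 2 * e * (phi q3 y - phi q2 y) - 2 * e * y * (psi q3 y - psi q2 y)" if y: "y \<in> U" for y
  proof -
    have ynz: "poly q0 y \<noteq> 0" "poly q1 y \<noteq> 0" "poly q2 y \<noteq> 0" "poly q3 y \<noteq> 0" "poly q4 y \<noteq> 0"
      using Upos[OF y] by auto
    have dps: "(phi q3 has_real_derivative psi q3 y) (at y)" "(phi q2 has_real_derivative psi q2 y) (at y)"
      using dphi ynz by blast+
    have da: "(a has_real_derivative a y * (phi q3 y + phi q1 y - 2 * phi q2 y)) (at y)"
      unfolding a_def using DERIV_tt ynz by blast
    have db: "(b has_real_derivative b y * (phi q4 y + phi q2 y - 2 * phi q3 y)) (at y)"
      unfolding b_def using DERIV_tt ynz by blast
    show ?thesis
    proof (rule deriv_eq_open[OF U(1) y BB1])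
      show "((\<lambda>y. b y * a y) has_real_derivative b y * a y * ((phi q4 y + phi q2 y - 2 * phi q3 y) + (phi q3 y + phi q1 y - 2 * phi q2 y))) (at y)"
        by (rule derivative_eq_intros da db | simp add: algebra_simps)+
      show "((\<lambda>y. y + e * ee (j+1) - 2 * e * y * (phi q3 y - phi q2 y)) has_real_derivative
         1 - 2 * e * (phi q3 y - phi q2 y) - 2 * e * y * (psi q3 y - psi q2 y)) (at y)"
        by (rule DERIV_cong, (rule derivative_intros dps)+, simp add: algebra_simps)
    qed
  qed
  have Lam: "phi q4 y + phi q2 y - 2 * phi q3 y = e * (al y / a y - be y / b y) - (phi q3 y + phi q1 y - 2 * phi q2 y)"
    if y: "y \<in> U" for y
  proof -
    have h: "al y * b y - be y * a y = e * (b y * a y * ((phi q4 y + phi q2 y - 2 * phi q3 y) + (phi q3 y + phi q1 y - 2 * phi q2 y)))"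
    proof -
      have "e * (b y * a y * ((phi q4 y + phi q2 y - 2 * phi q3 y) + (phi q3 y + phi q1 y - 2 * phi q2 y)))
          = e * (1 - 2 * e * (phi q3 y - phi q2 y) - 2 * e * y * (psi q3 y - psi q2 y))"
        using BB1'[OF y] by simp
      also have "\<dots> = e - 2 * (e * e) * (phi q3 y - phi q2 y) - 2 * (e * e) * y * (psi q3 y - psi q2 y)"
        by (simp add: algebra_simps)
      also have "\<dots> = e - 2 * (phi q3 y - phi q2 y) - 2 * y * (psi q3 y - psi q2 y)"
        by (simp add: ee1)
      finally show ?thesis using TT2[OF y] TT1[OF y] by (simp add: algebra_simps)
    qed
    have "e * (al y / a y - be y / b y) = e * (al y * b y - be y * a y) / (a y * b y)"
      using tnz[OF y] by (simp add: field_simps)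
    also have "\<dots> = (phi q4 y + phi q2 y - 2 * phi q3 y) + (phi q3 y + phi q1 y - 2 * phi q2 y)"
      unfolding h using tnz[OF y] by (simp add: field_simps eeX)
    finally show ?thesis by simp
  qed
  have dal: "(al has_real_derivative poly (pderiv (cc j)) x) (at x)" unfolding al_def by (rule poly_DERIV)
  have dbe: "(be has_real_derivative poly (pderiv (cc (j+1))) x) (at x)" unfolding be_def by (rule poly_DERIV)
  define A1 where "A1 = phi q3 x + phi q1 x - 2 * phi q2 x"
  define A2 where "A2 = psi q3 x + psi q1 x - 2 * psi q2 x"
  define l where "l = phi q4 x + phi q2 x - 2 * phi q3 x"
  define l1 where "l1 = psi q4 x + psi q2 x - 2 * psi q3 x"
  define Sp where "Sp = phi q2 x + phi q0 x - 2 * phi q1 x"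
  have Lamder: "l1 = e * ((poly (pderiv (cc j)) x * a x - al x * (a x * A1)) / (a x * a x)
        - (poly (pderiv (cc (j+1))) x * b x - be x * (b x * l)) / (b x * b x)) - A2"
  proof (rule deriv_eq_open[OF U Lam])
    show "((\<lambda>y. phi q4 y + phi q2 y - 2 * phi q3 y) has_real_derivative l1) (at x)"
      unfolding l1_def by (rule DERIV_cong, (rule derivative_intros dps)+, simp add: algebra_simps)
    show "((\<lambda>y. e * (al y / a y - be y / b y) - (phi q3 y + phi q1 y - 2 * phi q2 y)) has_real_derivative
       e * ((poly (pderiv (cc j)) x * a x - al x * (a x * A1)) / (a x * a x)
        - (poly (pderiv (cc (j+1))) x * b x - be x * (b x * l)) / (b x * b x)) - A2) (at x)"
    proof -
      have axnz: "a x \<noteq> 0" and bxnz: "b x \<noteq> 0" using tnz[OF U(2)] by auto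
      show ?thesis
      apply (rule DERIV_cong)
       apply (rule derivative_intros dps dal dbe da db DERIV_divide axnz bxnz)+
      using axnz bxnz by (simp add: algebra_simps A1_def A2_def l_def)
    qed
  qed
  have par: "(al x = x \<and> be x = 1 \<and> poly (pderiv (cc j)) x = 1 \<and> poly (pderiv (cc (j+1))) x = 0
           \<and> ee (j+1) - ee j = 4 \<and> ee (j+2) - ee (j+1) = 2) \<or>
          (al x = 1 \<and> be x = x \<and> poly (pderiv (cc j)) x = 0 \<and> poly (pderiv (cc (j+1))) x = 1
           \<and> ee (j+1) - ee j = 2 \<and> ee (j+2) - ee (j+1) = 4)"
    by (cases "even j") (auto simp: al_def be_def cc_def ee_def pderiv_pCons)
  have R: "b x * (2 * al x * b x - be x * a x - 2 * l - 2 * x * l1)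
     = be x * (a x * b x + e * (ee (j+2) - ee (j+1)) - 2 * e * x * l)"
  proof (rule core_R[OF e tnz[OF U(2), THEN conjunct1] tnz[OF U(2), THEN conjunct2, THEN conjunct1] _ par])
    show "x \<noteq> 0" using xnz by simp
    show "l = e * (al x / a x - be x / b x) - A1" using Lam[OF U(2)] unfolding l_def A1_def by simp
    show "l1 = e * (poly (pderiv (cc j)) x / a x - al x * A1 / a x - poly (pderiv (cc (j+1))) x / b x + be x * l / b x) - A2"
      unfolding Lamder using tnz[OF U(2)] by (simp add: field_simps)
    show "a x * b x - a x * p x = e * (ee (j+1) - ee j) - 2 * e * x * A1"
      using BB1[OF U(2)] BB0[OF U(2)] unfolding A1_def by (simp add: algebra_simps)
    show "a x * b x * (A1 + l) - a x * p x * (A1 + Sp) = - 2 * e * (A1 + x * A2)"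
      using BB1'[OF U(2)] BB0'[OF U(2)] unfolding A1_def A2_def l_def Sp_def by (simp add: algebra_simps)
    show "be x * a x - al x * p x = e * a x * p x * (A1 + Sp)"
    proof -
      have "e * (a x * p x * ((phi q3 x + phi q1 x - 2 * phi q2 x) + (phi q2 x + phi q0 x - 2 * phi q1 x)))
          = e * (1 - 2 * e * (phi q2 x - phi q1 x) - 2 * e * x * (psi q2 x - psi q1 x))"
        using BB0'[OF U(2)] by simp
      also have "\<dots> = e - 2 * (phi q2 x - phi q1 x) - 2 * x * (psi q2 x - psi q1 x)"
        by (simp add: algebra_simps eeX)
      finally show ?thesis using TT1[OF U(2)] TT0[OF U(2)] unfolding A1_def Sp_def by (simp add: algebra_simps)
    qed
  qed
  define K where "K = x + e * real (j+3) - 2 * x * psi q4 x - 2 * phi q4 x"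
  define M where "M = x + e * ee (j+2) - 2 * e * x * (phi q4 x - phi q3 x)"
  have K: "K = 2 * al x * b x - be x * a x - 2 * l - 2 * x * l1"
  proof -
    have "e * (b x * a x * (l + A1)) = al x * b x - be x * a x"
    proof -
      have lA: "l + A1 = e * (al x / a x - be x / b x)" using Lam[OF U(2)] unfolding l_def A1_def by simp
      have "e * (b x * a x * (l + A1)) = (e * e) * (b x * a x * (al x / a x - be x / b x))"
        unfolding lA by (simp add: algebra_simps)
      also have "\<dots> = al x * b x - be x * a x" using tnz[OF U(2)] by (simp add: ee1 field_simps)
      finally show ?thesis .
    qed
    moreover have "e * (b x * a x * ((phi q4 x + phi q2 x - 2 * phi q3 x) + (phi q3 x + phi q1 x - 2 * phi q2 x)))
          = e - 2 * (phi q3 x - phi q2 x) - 2 * x * (psi q3 x - psi q2 x)"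
    proof -
      have "e * (b x * a x * ((phi q4 x + phi q2 x - 2 * phi q3 x) + (phi q3 x + phi q1 x - 2 * phi q2 x)))
          = e * (1 - 2 * e * (phi q3 x - phi q2 x) - 2 * e * x * (psi q3 x - psi q2 x))"
        using BB1'[OF U(2)] by simp
      also have "\<dots> = e - 2 * (phi q3 x - phi q2 x) - 2 * x * (psi q3 x - psi q2 x)"
        by (simp add: algebra_simps eeX)
      finally show ?thesis .
    qed
    ultimately show ?thesis using TT2[OF U(2)] unfolding K_def l_def l1_def A1_def
      by (simp add: algebra_simps)
  qed
  have M: "M = a x * b x + e * (ee (j+2) - ee (j+1)) - 2 * e * x * l"
    using BB1[OF U(2)] unfolding M_def l_def by (simp add: algebra_simps)
  have KM: "K * b x = be x * M" using R unfolding K M by (simp add: algebra_simps)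
  have Lv: "poly (ohyama_lhs (\<epsilon> * int (j+3)) q4) x = (poly q4 x)^2 * K"
    using lhs_point[of q4 x "\<epsilon> * int (j+3)"] xnz unfolding K_def e_def by (simp add: field_simps)
  have Bv: "poly (Bexp \<epsilon> (j+2) q3 q4) x = poly q4 x * poly q3 x * M"
    using Bexp_point[of q3 x q4 \<epsilon> "j+2"] xnz unfolding M_def e_def by (simp add: field_simps)
  have bx: "b x = poly q4 x * poly q2 x / (poly q3 x)^2" unfolding b_def tt_def by simp
  show ?thesis
    unfolding Lv Bv be3
  proof -
    have "(poly q4 x)\<^sup>2 * K * poly q2 x = poly q4 x * (poly q3 x)^2 * (K * b x)"
      unfolding bx using xnz by (simp add: field_simps power2_eq_square)
    also have "\<dots> = be x * poly q3 x * (poly q4 x * poly q3 x * M)"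
      unfolding KM by (simp add: algebra_simps power2_eq_square)
    finally show "(poly q4 x)\<^sup>2 * K * poly q2 x = be x * poly q3 x * (poly q4 x * poly q3 x * M)" .
  qed
qed


lemma poly_eq_infinite:
  fixes p q :: "real poly"
  assumes "infinite U" "\<And>y. y \<in> U \<Longrightarrow> poly p y = poly q y"
  shows "p = q"
proof (rule ccontr)
  assume "p \<noteq> q"
  then have "p - q \<noteq> 0" by simp
  then have "finite {x. poly (p - q) x = 0}" by (rule poly_roots_finite)
  moreover have "U \<subseteq> {x. poly (p - q) x = 0}" using assms(2) by auto
  ultimately show False using assms(1) finite_subset by blast
qed

lemma good_set:
  fixes P :: "real poly"
  assumes "P \<noteq> 0"
  shows "open {y. 0 < y \<and> poly P y \<noteq> 0}" "infinite {y. 0 < y \<and> poly P y \<noteq> 0}"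
proof -
  have c: "continuous_on UNIV (poly P)"
    by (simp add: continuous_at_imp_continuous_on)
  have "open ({y. 0 < y} \<inter> {y. poly P y \<noteq> 0})"
    by (intro open_Int open_Collect_neq c continuous_on_const) (simp add: open_greaterThan[unfolded greaterThan_def])
  then show "open {y. 0 < y \<and> poly P y \<noteq> 0}" by (simp add: Collect_conj_eq)
  show "infinite {y. 0 < y \<and> poly P y \<noteq> 0}"
  proof
    assume f: "finite {y. 0 < y \<and> poly P y \<noteq> 0}"
    have "{0<..} \<subseteq> {y. 0 < y \<and> poly P y \<noteq> 0} \<union> {x. poly P x = 0}" by auto
    moreover have "finite ({y. 0 < y \<and> poly P y \<noteq> 0} \<union> {x. poly P x = 0})"
      using f poly_roots_finite[OF assms] by simp
    ultimately show False using infinite_Ioi finite_subset by blast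
  qed
qed

lemma step_poly:
  fixes \<epsilon> :: int and j :: nat and q0 q1 q2 q3 q4 :: "real poly"
  assumes eps: "\<epsilon> = 1 \<or> \<epsilon> = -1"
    and nz: "q0 \<noteq> 0" "q1 \<noteq> 0" "q2 \<noteq> 0" "q3 \<noteq> 0" "q4 \<noteq> 0"
    and T0: "Tr \<epsilon> j q0 q1 q2" and T1: "Tr \<epsilon> (j+1) q1 q2 q3" and T2: "Tr \<epsilon> (j+2) q2 q3 q4"
    and B0: "Br \<epsilon> j q0 q1 q2 q3" and B1: "Br \<epsilon> (j+1) q1 q2 q3 q4"
  shows "ohyama_lhs (\<epsilon> * int (j+3)) q4 * q2 = cc (j+3) * q3 * Bexp \<epsilon> (j+2) q3 q4"
proof -
  define P where "P = q0 * q1 * q2 * q3 * q4"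
  have P: "P \<noteq> 0" using nz by (simp add: P_def)
  define U where "U = {y. 0 < y \<and> poly P y \<noteq> 0}"
  show ?thesis
  proof (rule poly_eq_infinite)
    show "infinite U" unfolding U_def using good_set[OF P] by simp
    fix y assume y: "y \<in> U"
    have "poly (ohyama_lhs (\<epsilon> * int (j+3)) q4) y * poly q2 y = poly (cc (j+3)) y * poly q3 y * poly (Bexp \<epsilon> (j+2) q3 q4) y"
    proof (rule step_point[OF eps _ y _ T0 T1 T2 B0 B1])
      show "open U" unfolding U_def using good_set[OF P] by simp
      fix z assume "z \<in> U" then show "z > 0 \<and> poly q0 z \<noteq> 0 \<and> poly q1 z \<noteq> 0 \<and> poly q2 z \<noteq> 0 \<and> poly q3 z \<noteq> 0 \<and> poly q4 z \<noteq> 0"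
        unfolding U_def P_def by auto
    qed
    then show "poly (ohyama_lhs (\<epsilon> * int (j+3)) q4 * q2) y = poly (cc (j+3) * q3 * Bexp \<epsilon> (j+2) q3 q4) y"
      by simp
  qed
qed


definition cp :: "real poly \<Rightarrow> complex poly" where
  "cp p = map_poly complex_of_real p"

lemma coeff_cp [simp]: "coeff (cp p) n = complex_of_real (coeff p n)"
  by (simp add: cp_def coeff_map_poly)

lemma cp_add [simp]: "cp (p + q) = cp p + cp q"
  by (simp add: poly_eq_iff)
lemma cp_diff [simp]: "cp (p - q) = cp p - cp q"
  by (simp add: poly_eq_iff)
lemma cp_mult [simp]: "cp (p * q) = cp p * cp q"
  by (simp add: poly_eq_iff coeff_mult)
lemma cp_pderiv [simp]: "cp (pderiv p) = pderiv (cp p)"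
  by (simp add: poly_eq_iff coeff_pderiv)
lemma cp_pCons [simp]: "cp (pCons a p) = pCons (complex_of_real a) (cp p)"
  by (simp add: poly_eq_iff coeff_pCons split: nat.split)
lemma cp_0 [simp]: "cp 0 = 0" by (simp add: poly_eq_iff)
lemma cp_1 [simp]: "cp 1 = 1" by (simp add: poly_eq_iff coeff_1)
lemma cp_smult [simp]: "cp (smult a p) = smult (complex_of_real a) (cp p)"
  by (simp add: poly_eq_iff)
lemma cp_power [simp]: "cp (p ^ n) = (cp p) ^ n"
  by (induction n) simp_all
lemma cp_eq_0_iff [simp]: "cp p = 0 \<longleftrightarrow> p = 0"
  by (simp add: poly_eq_iff)
lemma poly_cp_real: "poly (cp p) (complex_of_real x) = complex_of_real (poly p x)"
  by (induction p) simp_all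


definition Lc :: "complex \<Rightarrow> complex poly \<Rightarrow> complex poly" where
  "Lc n Y = [:n, 1:] * Y^2 - [:2:] * ([:0,1:] * Y * pderiv (pderiv Y))
   + [:2:] * ([:0,1:] * (pderiv Y)^2) - [:2:] * (Y * pderiv Y)"

lemma cp_lhs: "cp (ohyama_lhs n y) = Lc (of_int n) (cp y)"
  by (simp add: ohyama_lhs_def Lc_def)

lemma cp_Bexp: "cp (Bexp \<epsilon> i x y) = [:of_real (of_int \<epsilon> * ee i), 1:] * cp y * cp x
   - [:2 * of_int \<epsilon>:] * ([:0,1:] * (pderiv (cp y) * cp x - cp y * pderiv (cp x)))"
  by (simp add: Bexp_def)

lemma pderiv_pow_rel: "(q::'a::{idom,semiring_char_0} poly) * pderiv (q ^ k) = [:of_nat k:] * (q ^ k * pderiv q)"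
proof (cases k)
  case 0 then show ?thesis by simp
next
  case (Suc m)
  have "q * pderiv (q ^ Suc m) = q * (smult (of_nat (Suc m)) (q ^ m) * pderiv q)"
    by (simp only: pderiv_power_Suc)
  also have "\<dots> = [:of_nat (Suc m):] * (q ^ Suc m * pderiv q)"
    by (simp add: algebra_simps)
  finally show ?thesis using Suc by simp
qed

lemma cl_complex:
  fixes X Y Wp Up C :: "complex poly" and nn gm e r :: complex
  assumes Y0: "poly Y 0 \<noteq> 0" and e: "e \<noteq> 0"
    and nc: "poly X r \<noteq> 0" and Yr: "poly Y r = 0"
    and C: "poly C r \<noteq> 0"
    and T: "Lc nn Y = C * Wp * X"
    and B: "Wp * Up = [:gm,1:] * Y * X - [:2*e:] * ([:0,1:] * (pderiv Y * X - Y * pderiv X))"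
  shows "poly Wp r \<noteq> 0"
proof
  assume Wr: "poly Wp r = 0"
  have r0: "r \<noteq> 0" using Y0 Yr by auto
  have Ynz: "Y \<noteq> 0" using Y0 by auto
  define \<pi> where "\<pi> = [:-r, 1:]"
  have dpi: "pderiv \<pi> = 1" by (simp add: \<pi>_def pderiv_pCons)
  have pir: "poly \<pi> r = 0" by (simp add: \<pi>_def)
  define m where "m = order r Y"
  have m1: "m \<noteq> 0" using Yr Ynz order_root unfolding m_def by blast
  then obtain j where mj: "m = Suc j" by (cases m) auto
  obtain G where YG: "Y = \<pi> ^ m * G" using order_1[of r Y] unfolding m_def \<pi>_def by (auto elim: dvdE)
  have Gr: "poly G r \<noteq> 0"
  proof
    assume "poly G r = 0"
    then have "\<pi> dvd G" unfolding \<pi>_def using dvd_iff_poly_eq_0[of "-r" G] by simp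
    then have "\<pi> ^ Suc m dvd Y" unfolding YG by (simp add: mult_dvd_mono)
    then show False using order_2[OF Ynz, of r] unfolding m_def \<pi>_def by simp
  qed
  define P where "P = \<pi> ^ j"
  define D where "D = pderiv P"
  have piD: "\<pi> * D = [:of_nat j:] * P"
    using pderiv_pow_rel[of \<pi> j] unfolding D_def P_def dpi by simp
  have Y: "Y = \<pi> * P * G" unfolding YG mj P_def by simp
  define V where "V = [:of_nat (Suc j):] * G + \<pi> * pderiv G"
  have dY: "pderiv Y = P * V"
  proof -
    have "pderiv Y = \<pi> * P * pderiv G + G * (\<pi> * D + P)"
      unfolding Y D_def by (simp add: pderiv_mult dpi algebra_simps)
    also have "\<dots> = P * V" unfolding piD V_def by (simp add: algebra_simps smult_add_left)
    finally show ?thesis .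
  qed
  have ddY: "pderiv (pderiv Y) = P * pderiv V + D * V"
    unfolding dY D_def by (simp add: pderiv_mult algebra_simps)
  have YddY: "Y * pderiv (pderiv Y) = P * P * (G * ([:of_nat j:] * V + \<pi> * pderiv V))"
  proof -
    have "Y * pderiv (pderiv Y) = P * P * G * \<pi> * pderiv V + P * G * V * (\<pi> * D)"
      unfolding ddY unfolding Y by (simp add: algebra_simps)
    also have "\<dots> = P * P * (G * ([:of_nat j:] * V + \<pi> * pderiv V))"
      unfolding piD by (simp add: algebra_simps)
    finally show ?thesis .
  qed
  define W where "W = [:nn, 1:] * \<pi>^2 * G^2 - [:2:] * ([:0,1:] * (G * ([:of_nat j:] * V + \<pi> * pderiv V)))
     + [:2:] * ([:0,1:] * V^2) - [:2:] * (\<pi> * G * V)"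
  have LW: "Lc nn Y = P * P * W"
  proof -
    have "Lc nn Y = [:nn, 1:] * Y^2 - [:2:] * ([:0,1:] * (Y * pderiv (pderiv Y)))
      + [:2:] * ([:0,1:] * (pderiv Y)^2) - [:2:] * (Y * pderiv Y)"
      unfolding Lc_def by (simp add: algebra_simps)
    also have "\<dots> = P * P * W"
      unfolding YddY unfolding dY unfolding W_def Y by (simp add: algebra_simps power2_eq_square)
    finally show ?thesis .
  qed
  have Vr: "poly V r = of_nat (Suc j) * poly G r" unfolding V_def by (simp add: pir)
  have Wr0: "poly W r = 2 * r * of_nat (Suc j) * (poly G r)^2"
    unfolding W_def by (simp add: pir Vr algebra_simps power2_eq_square)
  have sj: "(of_nat (Suc j) :: complex) \<noteq> 0" by (rule of_nat_neq_0)
  have Wnz: "poly W r \<noteq> 0" unfolding Wr0 using r0 Gr sj by simp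
  define U where "U = [:gm,1:] * \<pi> * G * X - [:2*e:] * ([:0,1:] * (V * X - \<pi> * G * pderiv X))"
  have BU: "Wp * Up = P * U"
    unfolding B U_def dY unfolding Y by (simp add: algebra_simps)
  have Ur0: "poly U r = - 2 * e * r * of_nat (Suc j) * poly G r * poly X r"
    unfolding U_def by (simp add: pir Vr algebra_simps)
  have Unz: "poly U r \<noteq> 0" unfolding Ur0 using r0 Gr e nc sj by simp
  have Pnz: "P \<noteq> 0" unfolding P_def \<pi>_def by simp
  have ordP: "order r P = j" unfolding P_def \<pi>_def by (rule order_power_n_n)
  have W0: "W \<noteq> 0" using Wnz by auto
  have U0: "U \<noteq> 0" using Unz by auto
  have ordW: "order r W = 0" using Wnz by (simp add: order_0I)
  have ordU: "order r U = 0" using Unz by (simp add: order_0I)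
  have L0: "P * P * W \<noteq> 0" using Pnz W0 by simp
  have ordL: "order r (P * P * W) = 2 * j"
    using L0 Pnz W0 by (simp add: order_mult ordP ordW)
  have CWX: "C * Wp * X \<noteq> 0" using L0 T LW by metis
  have ordC: "order r C = 0" using C by (simp add: order_0I)
  have ordX: "order r X = 0" using nc by (simp add: order_0I)
  have ordWp: "order r Wp = 2 * j"
  proof -
    have "order r (C * Wp * X) = order r C + order r Wp + order r X"
      using CWX by (simp add: order_mult)
    then show ?thesis using ordL T LW ordC ordX by simp
  qed
  have PU0: "P * U \<noteq> 0" using Pnz U0 by simp
  have WU0: "Wp * Up \<noteq> 0" using BU PU0 by simp
  have "order r (Wp * Up) = order r Wp + order r Up" by (rule order_mult[OF WU0])
  moreover have "order r (P * U) = j" using PU0 by (simp add: order_mult ordP ordU)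
  ultimately have "2 * j + order r Up = j" using BU ordWp by simp
  then have "j = 0" by simp
  then have "order r Wp = 0" using ordWp by simp
  moreover have "Wp \<noteq> 0" using CWX by auto
  ultimately have "poly Wp r \<noteq> 0" using order_root by blast
  with Wr show False by simp
qed


lemma complex_root_exists: "degree (B::complex poly) \<noteq> 0 \<Longrightarrow> \<exists>z. poly B z = 0"
  by (metis fundamental_theorem_of_algebra constant_degree)

lemma dvd_nocommon_complex:
  fixes A B p q :: "complex poly"
  assumes "A * p = B * q" "B \<noteq> 0" "\<And>z. poly B z = 0 \<Longrightarrow> poly A z \<noteq> 0"
  shows "B dvd p"
  using assms
proof (induction "degree B" arbitrary: B p q rule: less_induct)
  case less
  show ?case
  proof (cases "degree B = 0")
    case True
    then obtain b where b: "B = [:b:]" by (metis degree_eq_zeroE)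
    then have "b \<noteq> 0" using less.prems by simp
    then have "p = B * smult (1/b) p" unfolding b by simp
    then show ?thesis by (metis dvd_triv_left)
  next
    case False
    then obtain z where z: "poly B z = 0" using complex_root_exists by blast
    then obtain B1 where B1: "B = [:-z,1:] * B1" using dvd_iff_poly_eq_0[of "-z" B] by (auto elim: dvdE)
    have Az: "poly A z \<noteq> 0" using less.prems(3) z by blast
    have "poly (A * p) z = 0" using less.prems(1) B1 by simp
    then have "poly p z = 0" using Az by simp
    then obtain p1 where p1: "p = [:-z,1:] * p1" using dvd_iff_poly_eq_0[of "-z" p] by (auto elim: dvdE)
    have "[:-z,1:] * (A * p1) = [:-z,1:] * (B1 * q)" using less.prems(1) B1 p1 by (simp add: algebra_simps)
    moreover have nzl: "[:-z,1:] \<noteq> (0::complex poly)" by simp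
    ultimately have eq: "A * p1 = B1 * q" using mult_left_cancel[OF nzl] by blast
    have B10: "B1 \<noteq> 0" using less.prems(2) B1 by auto
    have "degree B = degree [:-z,1:] + degree B1" by (simp only: B1 degree_mult_eq[OF nzl B10])
    then have lt: "degree B1 < degree B" by simp
    have "B1 dvd p1"
    proof (rule less.hyps[OF lt eq B10])
      fix w assume "poly B1 w = 0"
      then have "poly B w = 0" unfolding B1 by simp
      then show "poly A w \<noteq> 0" using less.prems(3) by blast
    qed
    then have "[:-z,1:] * B1 dvd [:-z,1:] * p1" by (rule mult_dvd_mono[OF dvd_refl])
    then show ?thesis by (simp only: B1 p1)
  qed
qed

lemma degree_cp [simp]: "degree (cp p) = degree p"
  unfolding cp_def by (rule degree_map_poly) simp

lemma dvd_from_cp: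
  fixes B p :: "real poly"
  assumes "cp B dvd cp p" "B \<noteq> 0"
  shows "B dvd p"
proof (rule ccontr)
  assume nd: "\<not> B dvd p"
  then have m0: "p mod B \<noteq> 0" by (simp add: dvd_eq_mod_eq_0)
  have "p = B * (p div B) + p mod B" by simp
  then have "cp p = cp B * cp (p div B) + cp (p mod B)" by (metis cp_add cp_mult)
  then have "cp (p mod B) = cp p - cp B * cp (p div B)" by simp
  moreover have "cp B dvd cp p - cp B * cp (p div B)" using assms(1) by simp
  ultimately have "cp B dvd cp (p mod B)" by simp
  then have "degree (cp B) \<le> degree (cp (p mod B))" using m0 dvd_imp_degree_le by (metis cp_eq_0_iff)
  moreover have "degree (p mod B) < degree B" using degree_mod_less'[OF assms(2) m0] .
  ultimately show False by simp
qed

definition nocommon :: "real poly \<Rightarrow> real poly \<Rightarrow> bool" where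
  "nocommon p q \<longleftrightarrow> (\<forall>z. poly (cp p) z = 0 \<longrightarrow> poly (cp q) z \<noteq> 0)"

lemma nocommon_sym: "nocommon p q \<longleftrightarrow> nocommon q p"
  unfolding nocommon_def by blast

lemma div_step:
  fixes x y L R :: "real poly"
  assumes "x * L = y * R" "y \<noteq> 0" "nocommon y x"
  shows "y dvd L"
proof (rule dvd_from_cp)
  show "cp y dvd cp L"
  proof (rule dvd_nocommon_complex)
    show "cp x * cp L = cp y * cp R" using assms(1) by (metis cp_mult)
    show "cp y \<noteq> 0" using assms(2) by simp
    show "\<And>z. poly (cp y) z = 0 \<Longrightarrow> poly (cp x) z \<noteq> 0" using assms(3) unfolding nocommon_def by blast
  qed
qed (use assms in auto)

lemma poly_cp_0: "poly (cp p) 0 = complex_of_real (poly p 0)"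
  using poly_cp_real[of p 0] by simp

lemma nocommon_cc:
  assumes "nocommon x y" "poly x 0 \<noteq> 0"
  shows "nocommon x (cc i * y)"
  using assms unfolding nocommon_def cc_def
  by (auto simp: poly_cp_0)

lemma cl_real:
  fixes x y w u :: "real poly" and \<epsilon> :: int
  assumes eps: "\<epsilon> = 1 \<or> \<epsilon> = -1" and y0: "poly y 0 \<noteq> 0" and nc: "nocommon x y"
    and T: "Tr \<epsilon> i x y w" and B: "Br \<epsilon> (i - 1) u x y w"
  shows "nocommon y w"
  unfolding nocommon_def
proof (intro allI impI)
  fix r assume Yr: "poly (cp y) r = 0"
  show "poly (cp w) r \<noteq> 0"
  proof (rule cl_complex[where Y = "cp y" and X = "cp x" and C = "cp (cc i)" and Up = "cp u"
       and nn = "of_int (\<epsilon> * int i)" and gm = "of_real (of_int \<epsilon> * ee (i - 1))" and e = "of_int \<epsilon>"])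
    show "poly (cp y) 0 \<noteq> 0" using y0 by (simp add: poly_cp_0)
    show "(of_int \<epsilon> :: complex) \<noteq> 0" using eps by auto
    show "poly (cp x) r \<noteq> 0" using nc Yr unfolding nocommon_def by blast
    show "poly (cp y) r = 0" by fact
    have r0: "r \<noteq> 0" using Yr y0 by (auto simp: poly_cp_0)
    show "poly (cp (cc i)) r \<noteq> 0" using r0 by (simp add: cc_def)
    show "Lc (of_int (\<epsilon> * int i)) (cp y) = cp (cc i) * cp w * cp x"
      using T unfolding Tr_def by (metis cp_lhs cp_mult)
    show "cp w * cp u = [:complex_of_real (of_int \<epsilon> * ee (i - 1)), 1:] * cp y * cp x -
      [:2 * of_int \<epsilon>:] * ([:0, 1:] * (pderiv (cp y) * cp x - cp y * pderiv (cp x)))"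
      using B unfolding Br_def by (metis cp_Bexp cp_mult)
  qed
qed


lemmas pc_simps = ohyama_lhs_def pderiv_pCons power2_eq_square Bexp_def ee_def cc_def

lemma sq2: "sq \<epsilon> 2 = [:of_int \<epsilon>, 1:]"
  by (simp add: numeral_2_eq_2 ohyama_lhs_def cc_def)

lemma lhs2: "\<epsilon> = 1 \<or> \<epsilon> = -1 \<Longrightarrow> ohyama_lhs (\<epsilon> * 2) [:of_int \<epsilon>, 1:] = [:0,1:] * [:5, 4 * of_int \<epsilon>, 1:]"
  by (elim disjE) (simp_all add: pc_simps)

lemma sq3: "\<epsilon> = 1 \<or> \<epsilon> = -1 \<Longrightarrow> sq \<epsilon> 3 = [:5, 4 * of_int \<epsilon>, 1:]"
proof -
  assume e: "\<epsilon> = 1 \<or> \<epsilon> = -1"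
  have "sq \<epsilon> 3 = ohyama_lhs (\<epsilon> * 2) (sq \<epsilon> 2) div (cc 2 * sq \<epsilon> 1)"
    by (simp add: numeral_3_eq_3 numeral_2_eq_2)
  also have "\<dots> = ([:0,1:] * [:5, 4 * of_int \<epsilon>, 1:]) div [:0,1:]"
    unfolding sq2 lhs2[OF e] by (simp add: cc_def)
  also have "\<dots> = [:5, 4 * of_int \<epsilon>, 1:]" by (rule nonzero_mult_div_cancel_left) simp
  finally show ?thesis .
qed

lemma lhs3: "\<epsilon> = 1 \<or> \<epsilon> = -1 \<Longrightarrow> ohyama_lhs (\<epsilon> * 3) [:5, 4 * of_int \<epsilon>, 1:] =
   [:of_int \<epsilon>, 1:] * [:35, 70 * of_int \<epsilon>, 40, 10 * of_int \<epsilon>, 1:]"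
  by (elim disjE) (simp_all add: pc_simps)

lemma sq4: "\<epsilon> = 1 \<or> \<epsilon> = -1 \<Longrightarrow> sq \<epsilon> 4 = [:35, 70 * of_int \<epsilon>, 40, 10 * of_int \<epsilon>, 1:]"
proof -
  assume e: "\<epsilon> = 1 \<or> \<epsilon> = -1"
  have "sq \<epsilon> 4 = ohyama_lhs (\<epsilon> * 3) (sq \<epsilon> 3) div (cc 3 * sq \<epsilon> 2)"
    by (simp add: numeral_3_eq_3 numeral_2_eq_2 eval_nat_numeral)
  also have "\<dots> = ([:of_int \<epsilon>, 1:] * [:35, 70 * of_int \<epsilon>, 40, 10 * of_int \<epsilon>, 1:]) div [:of_int \<epsilon>, 1:]"
    unfolding sq2 sq3[OF e] lhs3[OF e] by (simp add: cc_def)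
  also have "\<dots> = [:35, 70 * of_int \<epsilon>, 40, 10 * of_int \<epsilon>, 1:]" by (rule nonzero_mult_div_cancel_left) simp
  finally show ?thesis .
qed

lemma base_rel:
  assumes e: "\<epsilon> = 1 \<or> \<epsilon> = -1"
  shows "Tr \<epsilon> 1 (sq \<epsilon> 0) (sq \<epsilon> 1) (sq \<epsilon> 2)" "Tr \<epsilon> 2 (sq \<epsilon> 1) (sq \<epsilon> 2) (sq \<epsilon> 3)"
    "Tr \<epsilon> 3 (sq \<epsilon> 2) (sq \<epsilon> 3) (sq \<epsilon> 4)"
    "Br \<epsilon> 1 (sq \<epsilon> 0) (sq \<epsilon> 1) (sq \<epsilon> 2) (sq \<epsilon> 3)" "Br \<epsilon> 2 (sq \<epsilon> 1) (sq \<epsilon> 2) (sq \<epsilon> 3) (sq \<epsilon> 4)"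
  using e unfolding Tr_def Br_def sq2 sq3[OF e] sq4[OF e]
  by (auto simp: pc_simps)


definition Inv :: "int \<Rightarrow> nat \<Rightarrow> bool" where
  "Inv \<epsilon> k \<longleftrightarrow> (\<forall>i\<le>k+1. sq \<epsilon> i \<noteq> 0 \<and> poly (sq \<epsilon> i) 0 \<noteq> 0)
     \<and> (\<forall>i. 1 \<le> i \<and> i \<le> k \<longrightarrow> Tr \<epsilon> i (sq \<epsilon> (i-1)) (sq \<epsilon> i) (sq \<epsilon> (i+1)))
     \<and> (\<forall>i. 1 \<le> i \<and> i+1 \<le> k \<longrightarrow> Br \<epsilon> i (sq \<epsilon> (i-1)) (sq \<epsilon> i) (sq \<epsilon> (i+1)) (sq \<epsilon> (i+2)))
     \<and> (\<forall>i\<le>k. nocommon (sq \<epsilon> i) (sq \<epsilon> (i+1)))"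

lemma nocommon_1: "nocommon 1 q"
  unfolding nocommon_def by simp

lemma Inv3: assumes e: "\<epsilon> = 1 \<or> \<epsilon> = -1" shows "Inv \<epsilon> 3"
proof -
  note br = base_rel[OF e]
  have nz: "\<forall>i\<le>4. sq \<epsilon> i \<noteq> 0 \<and> poly (sq \<epsilon> i) 0 \<noteq> 0"
  proof (intro allI impI)
    fix i :: nat assume "i \<le> 4"
    then have "i = 0 \<or> i = 1 \<or> i = 2 \<or> i = 3 \<or> i = 4" by auto
    then show "sq \<epsilon> i \<noteq> 0 \<and> poly (sq \<epsilon> i) 0 \<noteq> 0"
      using e by (elim disjE) (auto simp: sq2 sq3 sq4)
  qed
  have Ts: "\<forall>i. 1 \<le> i \<and> i \<le> 3 \<longrightarrow> Tr \<epsilon> i (sq \<epsilon> (i-1)) (sq \<epsilon> i) (sq \<epsilon> (i+1))"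
  proof (intro allI impI)
    fix i :: nat assume "1 \<le> i \<and> i \<le> 3"
    then have "i = 1 \<or> i = 2 \<or> i = 3" by auto
    then show "Tr \<epsilon> i (sq \<epsilon> (i-1)) (sq \<epsilon> i) (sq \<epsilon> (i+1))"
      using br by (elim disjE) (simp_all add: numeral_eq_Suc)
  qed
  have Bs: "\<forall>i. 1 \<le> i \<and> i+1 \<le> 3 \<longrightarrow> Br \<epsilon> i (sq \<epsilon> (i-1)) (sq \<epsilon> i) (sq \<epsilon> (i+1)) (sq \<epsilon> (i+2))"
  proof (intro allI impI)
    fix i :: nat assume "1 \<le> i \<and> i+1 \<le> 3"
    then have "i = 1 \<or> i = 2" by auto
    then show "Br \<epsilon> i (sq \<epsilon> (i-1)) (sq \<epsilon> i) (sq \<epsilon> (i+1)) (sq \<epsilon> (i+2))"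
      using br by (elim disjE) (simp_all add: numeral_eq_Suc)
  qed
  have nc01: "nocommon (sq \<epsilon> 0) (sq \<epsilon> 1)" by (simp add: nocommon_1)
  have nc12: "nocommon (sq \<epsilon> 1) (sq \<epsilon> 2)" by (simp add: nocommon_1)
  have nc23: "nocommon (sq \<epsilon> 2) (sq \<epsilon> 3)"
  proof (rule cl_real[OF e _ nc12])
    show "poly (sq \<epsilon> 2) 0 \<noteq> 0" using nz by simp
    show "Tr \<epsilon> 2 (sq \<epsilon> 1) (sq \<epsilon> 2) (sq \<epsilon> 3)" using br by simp
    show "Br \<epsilon> (2 - 1) (sq \<epsilon> 0) (sq \<epsilon> 1) (sq \<epsilon> 2) (sq \<epsilon> 3)" using br by simp
  qed
  have nc34: "nocommon (sq \<epsilon> 3) (sq \<epsilon> 4)"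
  proof (rule cl_real[OF e _ nc23])
    show "poly (sq \<epsilon> 3) 0 \<noteq> 0" using nz by simp
    show "Tr \<epsilon> 3 (sq \<epsilon> 2) (sq \<epsilon> 3) (sq \<epsilon> 4)" using br by simp
    show "Br \<epsilon> (3 - 1) (sq \<epsilon> 1) (sq \<epsilon> 2) (sq \<epsilon> 3) (sq \<epsilon> 4)" using br by simp
  qed
  have Ns: "\<forall>i\<le>3. nocommon (sq \<epsilon> i) (sq \<epsilon> (i+1))"
  proof (intro allI impI)
    fix i :: nat assume "i \<le> 3"
    then have "i = 0 \<or> i = 1 \<or> i = 2 \<or> i = 3" by auto
    then show "nocommon (sq \<epsilon> i) (sq \<epsilon> (i+1))"
      using nc01 nc12 nc23 nc34 by (elim disjE) (simp_all add: numeral_eq_Suc)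
  qed
  show ?thesis unfolding Inv_def using nz Ts Bs Ns by simp
qed

lemma ee_pos: "ee k > 0" by (simp add: ee_def)

lemma Inv_step:
  assumes e: "\<epsilon> = 1 \<or> \<epsilon> = -1" and k: "k \<ge> 3" and I: "Inv \<epsilon> k"
  shows "Inv \<epsilon> (k+1)"
proof -
  define a where "a = sq \<epsilon>"
  from I have nz: "\<And>i. i \<le> k+1 \<Longrightarrow> a i \<noteq> 0 \<and> poly (a i) 0 \<noteq> 0"
    and Ts: "\<And>i. 1 \<le> i \<Longrightarrow> i \<le> k \<Longrightarrow> Tr \<epsilon> i (a (i-1)) (a i) (a (i+1))"
    and Bs: "\<And>i. 1 \<le> i \<Longrightarrow> i+1 \<le> k \<Longrightarrow> Br \<epsilon> i (a (i-1)) (a i) (a (i+1)) (a (i+2))"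
    and Ns: "\<And>i. i \<le> k \<Longrightarrow> nocommon (a i) (a (i+1))"
    unfolding Inv_def a_def by auto
  obtain j where kj: "k = j + 2" and j1: "j \<ge> 1" using k by (metis add.commute le_add_diff_inverse2 le_trans numeral_le_iff one_le_numeral semiring_norm(69) Suc_1 add_2_eq_Suc' nat_le_linear not_less_eq_eq numeral_3_eq_3 Suc_leI le_add2)
  have idx: "j - 1 + 1 = j" using j1 by simp
  have T0: "Tr \<epsilon> j (a (j-1)) (a j) (a (j+1))" using Ts[of j] j1 kj by simp
  have T1: "Tr \<epsilon> (j+1) (a j) (a (j+1)) (a (j+2))" using Ts[of "j+1"] kj by simp
  have T2: "Tr \<epsilon> (j+2) (a (j+1)) (a (j+2)) (a (j+3))" using Ts[of "j+2"] kj by (simp add: numeral_eq_Suc)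
  have B0: "Br \<epsilon> j (a (j-1)) (a j) (a (j+1)) (a (j+2))" using Bs[of j] j1 kj by simp
  have B1: "Br \<epsilon> (j+1) (a j) (a (j+1)) (a (j+2)) (a (j+3))" using Bs[of "j+1"] kj by (simp add: numeral_eq_Suc)
  have nzs: "a (j-1) \<noteq> 0" "a j \<noteq> 0" "a (j+1) \<noteq> 0" "a (j+2) \<noteq> 0" "a (j+3) \<noteq> 0"
    using nz kj by auto
  have SP: "ohyama_lhs (\<epsilon> * int (j+3)) (a (j+3)) * a (j+1) = cc (j+3) * a (j+2) * Bexp \<epsilon> (j+2) (a (j+2)) (a (j+3))"
    by (rule step_poly[OF e nzs T0 T1 T2 B0 B1])
  define L where "L = ohyama_lhs (\<epsilon> * int (k+1)) (a (k+1))"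
  define R where "R = Bexp \<epsilon> k (a k) (a (k+1))"
  define y where "y = cc (k+1) * a k"
  have SP': "a (k-1) * L = y * R" using SP unfolding L_def R_def y_def kj
    by (simp add: numeral_eq_Suc algebra_simps)
  have y0: "y \<noteq> 0" unfolding y_def cc_def using nz kj by auto
  have ncy: "nocommon y (a (k-1))"
  proof -
    have "nocommon (a (k-1)) (a k)" using Ns[of "k-1"] kj by simp
    then have "nocommon (a (k-1)) (cc (k+1) * a k)" using nocommon_cc nz[of "k-1"] by simp
    then show ?thesis unfolding y_def using nocommon_sym by blast
  qed
  have dv: "y dvd L" by (rule div_step[OF SP' y0 ncy])
  have ak2: "a (k+2) = L div y"
    unfolding a_def L_def y_def by (simp add: numeral_eq_Suc)
  have Ly: "L = y * a (k+2)" using dv ak2 by simp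
  have Tk1: "Tr \<epsilon> (k+1) (a k) (a (k+1)) (a (k+2))"
    unfolding Tr_def using Ly unfolding L_def y_def by (simp add: algebra_simps)
  have Bk: "Br \<epsilon> k (a (k-1)) (a k) (a (k+1)) (a (k+2))"
  proof -
    have "y * (a (k+2) * a (k-1)) = y * R" using SP' Ly by (simp add: algebra_simps)
    then have "a (k+2) * a (k-1) = R" using y0 by simp
    then show ?thesis unfolding Br_def R_def .
  qed
  have p0: "poly (a (k+2)) 0 \<noteq> 0"
  proof -
    have "poly (a (k+2)) 0 * poly (a (k-1)) 0 = poly (Bexp \<epsilon> k (a k) (a (k+1))) 0"
      using Bk unfolding Br_def by (metis poly_mult)
    also have "\<dots> = of_int \<epsilon> * ee k * poly (a (k+1)) 0 * poly (a k) 0"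
      by (simp add: poly_Bexp)
    finally have h: "poly (a (k+2)) 0 * poly (a (k-1)) 0 = of_int \<epsilon> * ee k * poly (a (k+1)) 0 * poly (a k) 0" .
    have "of_int \<epsilon> * ee k * poly (a (k+1)) 0 * poly (a k) 0 \<noteq> 0"
      using e ee_pos[of k] nz[of "k+1"] nz[of k] by auto
    then show ?thesis using h by auto
  qed
  have a2nz: "a (k+2) \<noteq> 0" using p0 by auto
  have nck: "nocommon (a (k+1)) (a (k+2))"
  proof (rule cl_real[OF e _ Ns[of k]])
    show "poly (a (k+1)) 0 \<noteq> 0" using nz by simp
    show "Tr \<epsilon> (k+1) (a k) (a (k+1)) (a (k+2))" by (rule Tk1)
    show "Br \<epsilon> (k + 1 - 1) (a (k-1)) (a k) (a (k+1)) (a (k+2))" using Bk by simp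
  qed simp
  have F1: "\<forall>i\<le>k+1+1. a i \<noteq> 0 \<and> poly (a i) 0 \<noteq> 0"
  proof (intro allI impI)
    fix i assume "i \<le> k + 1 + 1"
    then have "i \<le> k+1 \<or> i = k+2" by auto
    then show "a i \<noteq> 0 \<and> poly (a i) 0 \<noteq> 0" using nz p0 a2nz by auto
  qed
  have F2: "\<forall>i. 1 \<le> i \<and> i \<le> k + 1 \<longrightarrow> Tr \<epsilon> i (a (i - 1)) (a i) (a (i + 1))"
  proof (intro allI impI)
    fix i assume "1 \<le> i \<and> i \<le> k + 1"
    then have "(1 \<le> i \<and> i \<le> k) \<or> i = k+1" by auto
    then show "Tr \<epsilon> i (a (i - 1)) (a i) (a (i + 1))" using Ts Tk1 by auto
  qed
  have F3: "\<forall>i. 1 \<le> i \<and> i + 1 \<le> k + 1 \<longrightarrow> Br \<epsilon> i (a (i - 1)) (a i) (a (i + 1)) (a (i + 2))"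
  proof (intro allI impI)
    fix i assume "1 \<le> i \<and> i + 1 \<le> k + 1"
    then have "(1 \<le> i \<and> i + 1 \<le> k) \<or> i = k" by auto
    then show "Br \<epsilon> i (a (i - 1)) (a i) (a (i + 1)) (a (i + 2))" using Bs Bk by auto
  qed
  have F4: "\<forall>i\<le>k+1. nocommon (a i) (a (i + 1))"
  proof (intro allI impI)
    fix i assume "i \<le> k + 1"
    then have "i \<le> k \<or> i = k+1" by auto
    then show "nocommon (a i) (a (i + 1))" using Ns nck by auto
  qed
  show ?thesis unfolding Inv_def a_def[symmetric] using F1 F2 F3 F4 by blast
qed

lemma Inv_all: assumes e: "\<epsilon> = 1 \<or> \<epsilon> = -1" and k: "k \<ge> 3" shows "Inv \<epsilon> k"
  using k
proof (induction k rule: dec_induct)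
  case base then show ?case using Inv3[OF e] .
next
  case (step m) then show ?case using Inv_step[OF e] by simp
qed

lemma sq_facts:
  assumes e: "\<epsilon> = 1 \<or> \<epsilon> = -1"
  shows "sq \<epsilon> i \<noteq> 0" "1 \<le> i \<Longrightarrow> Tr \<epsilon> i (sq \<epsilon> (i-1)) (sq \<epsilon> i) (sq \<epsilon> (i+1))"
proof -
  have "Inv \<epsilon> (i+3)" by (rule Inv_all[OF e]) simp
  then show "sq \<epsilon> i \<noteq> 0" "1 \<le> i \<Longrightarrow> Tr \<epsilon> i (sq \<epsilon> (i-1)) (sq \<epsilon> i) (sq \<epsilon> (i+1))"
    unfolding Inv_def by auto
qed


definition zt :: "real \<Rightarrow> real" where "zt z = (z/2) powr (1/3)"

lemma zt_pos: "z > 0 \<Longrightarrow> zt z > 0" by (simp add: zt_def)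

lemma zt_cube: "z > 0 \<Longrightarrow> (zt z)^3 = z/2"
proof -
  assume z: "z > 0"
  have "(zt z)^3 = ((z/2) powr (1/3)) powr 3" unfolding zt_def using z by (simp add: powr_realpow)
  also have "\<dots> = z/2" using z by (simp add: powr_powr)
  finally show ?thesis .
qed

lemma zt_deriv: "z > 0 \<Longrightarrow> (zt has_real_derivative 1 / (6 * (zt z)^2)) (at z)"
proof -
  assume z: "z > 0"
  have d: "((\<lambda>z. (z/2) powr (1/3)) has_real_derivative (1/3) * (z/2) powr (1/3 - 1) * (1/2)) (at z)"
    using z by (intro DERIV_chain2[OF has_real_derivative_powr] derivative_eq_intros) auto
  have "(z/2) powr (1/3 - 1) * (zt z)^2 = 1"
  proof -
    have "(z/2) powr (1/3 - 1) * (zt z)^2 = (z/2) powr (1/3 - 1) * (z/2) powr (1/3) * (z/2) powr (1/3)"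
      unfolding zt_def by (simp add: power2_eq_square)
    also have "\<dots> = (z/2) powr ((1/3 - 1) + 1/3 + 1/3)" by (simp only: powr_add)
    also have "\<dots> = 1" using z by simp
    finally show ?thesis .
  qed
  then have "(1/3) * (z/2) powr (1/3 - 1) * (1/2) = 1 / (6 * (zt z)^2)"
    using zt_pos[OF z] by (simp add: field_simps)
  then show ?thesis using d unfolding zt_def by simp
qed


definition EE :: "real \<Rightarrow> real \<Rightarrow> int \<Rightarrow> real \<Rightarrow> real" where
  "EE K a n x = K * x powr a * exp (- 9/8 * x^4 - 3/2 * of_int n * x^2)"
definition Q1 :: "int \<Rightarrow> real \<Rightarrow> real" where "Q1 n x = - 9/2 * x^3 - 3 * of_int n * x"
definition Q2 :: "int \<Rightarrow> real \<Rightarrow> real" where "Q2 n x = - 27/2 * x^2 - 3 * of_int n"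
definition rr :: "real poly \<Rightarrow> real \<Rightarrow> real" where "rr p x = poly p (3*x^2)"
definition rr1 :: "real poly \<Rightarrow> real \<Rightarrow> real" where "rr1 p x = 6 * x * poly (pderiv p) (3*x^2)"
definition rr2 :: "real poly \<Rightarrow> real \<Rightarrow> real" where
  "rr2 p x = 6 * poly (pderiv p) (3*x^2) + 36 * x^2 * poly (pderiv (pderiv p)) (3*x^2)"
definition uu :: "real \<Rightarrow> int \<Rightarrow> real poly \<Rightarrow> real \<Rightarrow> real" where
  "uu a n p x = (a/x + Q1 n x) * rr p x + rr1 p x"
definition uu1 :: "real \<Rightarrow> int \<Rightarrow> real poly \<Rightarrow> real \<Rightarrow> real" where
  "uu1 a n p x = (- a/x^2 + Q2 n x) * rr p x + (a/x + Q1 n x) * rr1 p x + rr2 p x"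
definition gg :: "real \<Rightarrow> real \<Rightarrow> int \<Rightarrow> real poly \<Rightarrow> real \<Rightarrow> real" where
  "gg K a n p x = EE K a n x * rr p x"
definition gg1 :: "real \<Rightarrow> real \<Rightarrow> int \<Rightarrow> real poly \<Rightarrow> real \<Rightarrow> real" where
  "gg1 K a n p x = EE K a n x * uu a n p x"
definition gg2 :: "real \<Rightarrow> real \<Rightarrow> int \<Rightarrow> real poly \<Rightarrow> real \<Rightarrow> real" where
  "gg2 K a n p x = EE K a n x * ((a/x + Q1 n x) * uu a n p x + uu1 a n p x)"

lemma DERIV_EE: "x > 0 \<Longrightarrow> (EE K a n has_real_derivative EE K a n x * (a/x + Q1 n x)) (at x)"
proof -
  assume x: "x > 0"
  show ?thesis
    unfolding EE_def[abs_def]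
    apply (rule DERIV_cong)
     apply (rule derivative_intros x | simp only: mult.assoc)+
    using x by (simp add: Q1_def powr_diff field_simps)
qed

lemma DERIV_rr: "(rr p has_real_derivative rr1 p x) (at x)"
  unfolding rr_def rr1_def
  by (rule DERIV_cong, rule DERIV_chain2[OF poly_DERIV], (rule derivative_intros)+) (simp add: algebra_simps)

lemma DERIV_rr1: "(rr1 p has_real_derivative rr2 p x) (at x)"
  unfolding rr1_def rr2_def
  by (rule DERIV_cong, (rule derivative_intros DERIV_chain2[OF poly_DERIV])+) (simp add: algebra_simps power2_eq_square)

lemma DERIV_Q1: "(Q1 n has_real_derivative Q2 n x) (at x)"
  unfolding Q1_def Q2_def
  by (rule DERIV_cong, (rule derivative_intros)+) (simp add: algebra_simps power2_eq_square)

lemma DERIV_gg: "x > 0 \<Longrightarrow> (gg K a n p has_real_derivative gg1 K a n p x) (at x)"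
  unfolding gg_def[abs_def] gg1_def uu_def
  by (rule DERIV_cong, rule DERIV_mult[OF DERIV_EE DERIV_rr]) (simp_all add: algebra_simps)

lemma DERIV_uu: "x > 0 \<Longrightarrow> (uu a n p has_real_derivative uu1 a n p x) (at x)"
proof -
  assume x: "x > 0"
  then have x0: "x \<noteq> 0" by simp
  show ?thesis
    unfolding uu_def[abs_def] uu1_def
    apply (rule DERIV_cong)
     apply (rule derivative_intros DERIV_rr DERIV_rr1 DERIV_Q1 x0)+
    using x0 by (simp add: field_simps power2_eq_square)
qed

lemma DERIV_gg1: "x > 0 \<Longrightarrow> (gg1 K a n p has_real_derivative gg2 K a n p x) (at x)"
  unfolding gg1_def[abs_def] gg2_def
  by (rule DERIV_cong, rule DERIV_mult[OF DERIV_EE DERIV_uu]) (simp_all add: algebra_simps)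


lemma brk_x:
  assumes x: "x > 0"
  shows "x * ((gg1 K a n p x)^2 - gg K a n p x * gg2 K a n p x) - gg K a n p x * gg1 K a n p x
     = (EE K a n x)^2 * 6 * x * poly (ohyama_lhs n p) (3*x^2)"
proof -
  define E where "E = EE K a n x"
  define P0 where "P0 = poly p (3*x^2)"
  define P1 where "P1 = poly (pderiv p) (3*x^2)"
  define P2 where "P2 = poly (pderiv (pderiv p)) (3*x^2)"
  have x0: "x \<noteq> 0" using x by simp
  show ?thesis
    unfolding gg_def gg1_def gg2_def uu_def uu1_def rr_def rr1_def rr2_def Q1_def Q2_def poly_lhs
      E_def[symmetric] P0_def[symmetric] P1_def[symmetric] P2_def[symmetric]
    using x0 by (simp add: field_simps power2_eq_square eval_nat_numeral)
qed

definition sg :: "real \<Rightarrow> real \<Rightarrow> int \<Rightarrow> real poly \<Rightarrow> real \<Rightarrow> real" where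
  "sg K a n p z = gg K a n p (zt z)"

lemma DERIV_sg: "z > 0 \<Longrightarrow> (sg K a n p has_real_derivative gg1 K a n p (zt z) / (6 * (zt z)^2)) (at z)"
proof -
  assume z: "z > 0"
  have "((\<lambda>z. gg K a n p (zt z)) has_real_derivative gg1 K a n p (zt z) * (1 / (6 * (zt z)^2))) (at z)"
    by (rule DERIV_chain2[OF DERIV_gg[OF zt_pos[OF z]] zt_deriv[OF z]])
  then show ?thesis unfolding sg_def[abs_def] by simp
qed

lemma DERIV_sg1: "z > 0 \<Longrightarrow> ((\<lambda>z. gg1 K a n p (zt z) / (6 * (zt z)^2)) has_real_derivative
    gg2 K a n p (zt z) / (36 * (zt z)^4) - gg1 K a n p (zt z) / (18 * (zt z)^5)) (at z)"
proof -
  assume z: "z > 0"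
  have x: "zt z > 0" by (rule zt_pos[OF z])
  have nz: "6 * (zt z)^2 \<noteq> 0" using x by simp
  have d1: "((\<lambda>z. gg1 K a n p (zt z)) has_real_derivative gg2 K a n p (zt z) * (1 / (6 * (zt z)^2))) (at z)"
    by (rule DERIV_chain2[OF DERIV_gg1[OF x] zt_deriv[OF z]])
  have d2: "((\<lambda>z. 6 * (zt z)^2) has_real_derivative 2 / zt z) (at z)"
    by (rule DERIV_cong, (rule derivative_intros zt_deriv[OF z])+) (use x in \<open>simp add: field_simps power2_eq_square\<close>)
  show ?thesis
    apply (rule DERIV_cong[OF DERIV_divide[OF d1 d2 nz]])
    using x by (simp add: field_simps eval_nat_numeral)
qed

lemma sg_derivs:
  assumes z: "z > 0"
  shows "deriv (sg K a n p) z = gg1 K a n p (zt z) / (6 * (zt z)^2)"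
    "deriv (deriv (sg K a n p)) z = gg2 K a n p (zt z) / (36 * (zt z)^4) - gg1 K a n p (zt z) / (18 * (zt z)^5)"
proof -
  show d1: "deriv (sg K a n p) z = gg1 K a n p (zt z) / (6 * (zt z)^2)"
    by (rule DERIV_imp_deriv[OF DERIV_sg[OF z]])
  have ev: "\<And>y. y \<in> {0<..} \<Longrightarrow> gg1 K a n p (zt y) / (6 * (zt y)^2) = deriv (sg K a n p) y"
    using DERIV_imp_deriv[OF DERIV_sg] by simp
  have "(deriv (sg K a n p) has_real_derivative
      gg2 K a n p (zt z) / (36 * (zt z)^4) - gg1 K a n p (zt z) / (18 * (zt z)^5)) (at z)"
    by (rule has_field_derivative_transform_within_open[OF DERIV_sg1[OF z], of "{0<..}"]) (use z ev in auto)
  then show "deriv (deriv (sg K a n p)) z = gg2 K a n p (zt z) / (36 * (zt z)^4) - gg1 K a n p (zt z) / (18 * (zt z)^5)"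
    by (rule DERIV_imp_deriv)
qed

lemma sg_bracket:
  assumes z: "z > 0"
  shows "z * ((deriv (sg K a n p) z)^2 - sg K a n p z * deriv (deriv (sg K a n p)) z) - sg K a n p z * deriv (sg K a n p) z
     = (EE K a n (zt z))^2 * poly (ohyama_lhs n p) (3 * (zt z)^2) / (3 * zt z)"
proof -
  define x where "x = zt z"
  have x: "x > 0" unfolding x_def by (rule zt_pos[OF z])
  have zx: "z = 2 * x^3" using zt_cube[OF z] unfolding x_def by simp
  have B: "x * ((gg1 K a n p x)^2 - gg K a n p x * gg2 K a n p x) - gg K a n p x * gg1 K a n p x
     = (EE K a n x)^2 * 6 * x * poly (ohyama_lhs n p) (3*x^2)" by (rule brk_x[OF x])
  show ?thesis
    unfolding sg_derivs[OF z] sg_def x_def[symmetric]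
    using B x unfolding zx by (simp add: field_simps eval_nat_numeral)
qed


lemma ohyama_nz: "ohyama n \<noteq> 0"
  unfolding ohyama_sq using sq_facts(1)[of 1] sq_facts(1)[of "-1"] by auto

lemma ohyama_T: "ohyama_lhs n (ohyama n) = (if odd n then 1 else [:0,1:]) * ohyama (n+1) * ohyama (n-1)"
proof (cases "n \<ge> 1")
  case True
  define m where "m = nat n"
  have nm: "n = int m" and m1: "1 \<le> m" using True unfolding m_def by auto
  have "Tr 1 m (sq 1 (m-1)) (sq 1 m) (sq 1 (m+1))" using sq_facts(2)[of 1 m] m1 by simp
  moreover have "ohyama (n+1) = sq 1 (m+1)" "ohyama n = sq 1 m" "ohyama (n-1) = sq 1 (m-1)"
    unfolding ohyama_sq nm using m1 by (auto simp: nat_diff_distrib nat_add_distrib)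
  ultimately show ?thesis unfolding Tr_def cc_def nm by (simp add: algebra_simps)
next
  case False
  show ?thesis
  proof (cases "n = 0")
    case True
    then show ?thesis by (simp add: ohyama_sq ohyama_lhs_def numeral_eq_Suc)
  next
    case False
    with \<open>\<not> n \<ge> 1\<close> have nneg: "n \<le> -1" by simp
    define m where "m = nat (-n)"
    have nm: "n = - int m" and m1: "1 \<le> m" using nneg unfolding m_def by auto
    have "Tr (-1) m (sq (-1) (m-1)) (sq (-1) m) (sq (-1) (m+1))" using sq_facts(2)[of "-1" m] m1 by simp
    moreover have "ohyama (n-1) = sq (-1) (m+1)" "ohyama n = sq (-1) m"
      unfolding ohyama_sq nm using m1 by (auto simp: nat_add_distrib)
    moreover have "ohyama (n+1) = sq (-1) (m-1)"
    proof (cases "m = 1")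
      case True then show ?thesis unfolding nm by (simp add: ohyama_sq)
    next
      case False then show ?thesis unfolding nm ohyama_sq using m1 by (auto simp: nat_diff_distrib)
    qed
    ultimately show ?thesis unfolding Tr_def cc_def nm by (simp add: algebra_simps)
  qed
qed


definition Kn :: "int \<Rightarrow> real" where "Kn n = (if odd n then 3 powr (1/4) else 1)"
definition an :: "int \<Rightarrow> real" where "an n = (if odd n then 7/24 else -5/24)"
definition tau :: "int \<Rightarrow> real \<Rightarrow> real" where "tau n = sg (Kn n) (an n) n (ohyama n)"

lemma EE_rel:
  assumes x: "x > 0"
  shows "EE (Kn (n+1)) (an (n+1)) (n+1) x * EE (Kn (n-1)) (an (n-1)) (n-1) x
     = sqrt 3 * (EE (Kn n) (an n) n x)^2 * (if odd n then 1 else 3 * x^2) / (3 * x)"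
proof -
  define u where "u = x powr (-5/24)"
  define v where "v = x powr (7/24)"
  define w where "w = (3::real) powr (1/4)"
  define ex where "ex = exp (- 9/8 * x^4 - 3/2 * of_int n * x^2)"
  have vv: "v * v = x * (u * u)"
  proof -
    have "v * v = x powr (7/24 + 7/24)" unfolding v_def by (simp only: powr_add)
    also have "\<dots> = x powr (1 + (-5/24) + (-5/24))" by simp
    also have "\<dots> = x powr 1 * u * u" unfolding u_def by (simp only: powr_add)
    finally show ?thesis using x by simp
  qed
  have ww: "w * w = sqrt 3"
  proof -
    have "w * w = 3 powr (1/4 + 1/4)" unfolding w_def by (simp only: powr_add)
    also have "\<dots> = sqrt 3" by (simp add: powr_half_sqrt)
    finally show ?thesis .
  qed
  have s3: "sqrt 3 * sqrt 3 = (3::real)" by simp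
  have exs: "exp (- 9/8 * x^4 - 3/2 * of_int (n+1) * x^2) * exp (- 9/8 * x^4 - 3/2 * of_int (n-1) * x^2) = ex * ex"
    unfolding ex_def exp_add[symmetric] by (simp add: field_simps)
  have upos: "u > 0" unfolding u_def using x by simp
  define e1 where "e1 = exp (- 9/8 * x^4 - 3/2 * of_int (n+1) * x^2)"
  define e2 where "e2 = exp (- 9/8 * x^4 - 3/2 * of_int (n-1) * x^2)"
  have exs': "e1 * e2 = ex * ex" using exs unfolding e1_def e2_def .
  have En: "EE (Kn n) (an n) n x = Kn n * x powr (an n) * ex" unfolding EE_def ex_def by simp
  have E1: "EE (Kn (n+1)) (an (n+1)) (n+1) x = Kn (n+1) * x powr (an (n+1)) * e1" unfolding EE_def e1_def by simp
  have E2: "EE (Kn (n-1)) (an (n-1)) (n-1) x = Kn (n-1) * x powr (an (n-1)) * e2" unfolding EE_def e2_def by simp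
  show ?thesis
  proof (cases "odd n")
    case True
    then have p: "even (n+1)" "even (n-1)" by auto
    have "Kn (n+1) = 1" "Kn (n-1) = 1" "x powr (an (n+1)) = u" "x powr (an (n-1)) = u" "Kn n = w" "x powr (an n) = v"
      using p True unfolding Kn_def an_def u_def v_def w_def by auto
    then show ?thesis unfolding E1 E2 En using True exs' ww vv x s3
      by (simp add: field_simps power2_eq_square)
  next
    case False
    then have p: "odd (n+1)" "odd (n-1)" by auto
    have "Kn (n+1) = w" "Kn (n-1) = w" "x powr (an (n+1)) = v" "x powr (an (n-1)) = v" "Kn n = 1" "x powr (an n) = u"
      using p False unfolding Kn_def an_def u_def v_def w_def by auto
    then show ?thesis unfolding E1 E2 En using False exs' ww vv x s3
      by (simp add: field_simps power2_eq_square)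
  qed
qed

lemma tau_rec:
  assumes z: "z > 0"
  shows "tau (n+1) z * tau (n-1) z = sqrt 3 * (z * ((deriv (tau n) z)^2 - tau n z * deriv (deriv (tau n)) z) - tau n z * deriv (tau n) z)"
proof -
  define x where "x = zt z"
  have x: "x > 0" unfolding x_def by (rule zt_pos[OF z])
  have br: "z * ((deriv (tau n) z)^2 - tau n z * deriv (deriv (tau n)) z) - tau n z * deriv (tau n) z
     = (EE (Kn n) (an n) n x)^2 * poly (ohyama_lhs n (ohyama n)) (3 * x^2) / (3 * x)"
    unfolding tau_def x_def by (rule sg_bracket[OF z])
  have pl: "poly (ohyama_lhs n (ohyama n)) (3 * x^2) = (if odd n then 1 else 3 * x^2) * poly (ohyama (n+1)) (3*x^2) * poly (ohyama (n-1)) (3*x^2)"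
    unfolding ohyama_T by simp
  have "tau (n+1) z * tau (n-1) z = (EE (Kn (n+1)) (an (n+1)) (n+1) x * EE (Kn (n-1)) (an (n-1)) (n-1) x)
       * (poly (ohyama (n+1)) (3*x^2) * poly (ohyama (n-1)) (3*x^2))"
    unfolding tau_def sg_def gg_def rr_def x_def by (simp add: algebra_simps)
  also have "\<dots> = sqrt 3 * ((EE (Kn n) (an n) n x)^2 * poly (ohyama_lhs n (ohyama n)) (3 * x^2) / (3 * x))"
    unfolding EE_rel[OF x] pl by (simp add: algebra_simps)
  finally show ?thesis unfolding br .
qed


lemma tau_cont: "z > 0 \<Longrightarrow> isCont (tau n) z"
  unfolding tau_def using DERIV_sg DERIV_isCont by blast

lemma EE_pos: "x > 0 \<Longrightarrow> K > 0 \<Longrightarrow> EE K a n x > 0"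
  unfolding EE_def by simp

lemma Kn_pos: "Kn n > 0" unfolding Kn_def by simp

lemma tau_zero_finite: "finite {z. z > 0 \<and> tau n z = 0}"
proof -
  have "{z. z > 0 \<and> tau n z = 0} \<subseteq> (\<lambda>s. 2 * (sqrt (s/3))^3) ` {s. poly (ohyama n) s = 0}"
  proof
    fix z assume "z \<in> {z. z > 0 \<and> tau n z = 0}"
    then have z: "z > 0" and t0: "tau n z = 0" by auto
    have x: "zt z > 0" by (rule zt_pos[OF z])
    have "EE (Kn n) (an n) n (zt z) > 0" by (rule EE_pos[OF x Kn_pos])
    then have p0: "poly (ohyama n) (3 * (zt z)^2) = 0"
      using t0 unfolding tau_def sg_def gg_def rr_def by simp
    have "sqrt (3 * (zt z)^2 / 3) = zt z" using x by simp
    then have "z = 2 * (sqrt (3 * (zt z)^2 / 3))^3" using zt_cube[OF z] by simp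
    then show "z \<in> (\<lambda>s. 2 * (sqrt (s/3))^3) ` {s. poly (ohyama n) s = 0}" using p0 by blast
  qed
  moreover have "finite ((\<lambda>s. 2 * (sqrt (s/3))^3) ` {s. poly (ohyama n) s = 0})"
    using poly_roots_finite[OF ohyama_nz] by simp
  ultimately show ?thesis by (rule finite_subset)
qed

lemma eq_cofinite:
  fixes f g :: "real \<Rightarrow> real"
  assumes Z: "finite Z" and z: "z > 0" and eq: "\<And>y. y > 0 \<Longrightarrow> y \<notin> Z \<Longrightarrow> f y = g y"
    and cf: "isCont f z" and cg: "isCont g z"
  shows "f z = g z"
proof -
  define D where "D = insert z ((\<lambda>w. dist w z) ` (Z - {z}))"
  have Df: "finite D" unfolding D_def using Z by simp
  have Dpos: "\<forall>d\<in>D. d > 0" unfolding D_def using z by auto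
  define d where "d = Min D"
  have Dne: "D \<noteq> {}" unfolding D_def by simp
  have dD: "d \<in> D" unfolding d_def by (rule Min_in[OF Df Dne])
  have d: "d > 0" using dD Dpos by blast
  have claim: "\<forall>y. 0 < dist y z \<and> dist y z < d \<longrightarrow> f y = g y"
  proof (intro allI impI)
    fix y assume y: "0 < dist y z \<and> dist y z < d"
    have zD: "z \<in> D" unfolding D_def by simp
    have dz: "d \<le> z" unfolding d_def by (rule Min_le[OF Df zD])
    have "dist y z < z" using y dz by linarith
    then have "\<bar>y - z\<bar> < z" by (simp add: dist_real_def)
    then have yp: "y > 0" by (simp add: abs_less_iff)
    have "y \<notin> Z"
    proof
      assume yZ: "y \<in> Z"
      then have "y \<in> Z - {z}" using y by auto
      then have yD: "dist y z \<in> D" unfolding D_def by (intro insertI2 imageI)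
      have "d \<le> dist y z" unfolding d_def by (rule Min_le[OF Df yD])
      with y show False by simp
    qed
    then show "f y = g y" using eq yp by blast
  qed
  have ev: "eventually (\<lambda>y. f y = g y) (at z)"
    unfolding eventually_at by (rule exI[of _ d]) (use d claim in auto)
  have "f \<midarrow>z\<rightarrow> f z" using cf by (simp add: isCont_def)
  moreover have "f \<midarrow>z\<rightarrow> g z" using cg tendsto_cong[OF ev] unfolding isCont_def by simp
  ultimately show ?thesis by (rule LIM_unique)
qed

lemma deriv_eq_pos:
  fixes f g :: "real \<Rightarrow> real" and z :: real
  assumes "\<And>y. y > 0 \<Longrightarrow> f y = g y" "z > 0"
  shows "deriv f z = deriv g z"
proof (rule deriv_cong_ev)
  have h: "\<forall>x. dist x z < z \<longrightarrow> x \<in> {0<..}" by (auto simp: dist_real_def abs_less_iff)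
  have "eventually (\<lambda>y. y \<in> {0<..}) (nhds z)"
    unfolding eventually_nhds_metric using h assms(2) by blast
  then show "eventually (\<lambda>y. f y = g y) (nhds z)"
    by (rule eventually_mono) (use assms(1) in auto)
qed simp



lemma tau_formula:
  "tau n z = (let \<zeta> = (z/2) powr (1/3) in
      (if odd n
       then 3 powr (1/4) * \<zeta> powr (7/24)
              * exp (- 9/8 * \<zeta>^4 - 3/2 * of_int n * \<zeta>^2) * poly (ohyama n) (3 * \<zeta>^2)
       else \<zeta> powr (-5/24)
              * exp (- 9/8 * \<zeta>^4 - 3/2 * of_int n * \<zeta>^2) * poly (ohyama n) (3 * \<zeta>^2)))"
  unfolding tau_def sg_def gg_def EE_def rr_def zt_def Kn_def an_def Let_def by simp

lemma main_unique:
  fixes \<sigma> :: "int \<Rightarrow> real \<Rightarrow> real"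
  assumes diff: "\<And>n z. z > 0 \<Longrightarrow> \<sigma> n differentiable (at z)"
      and rec: "\<And>n z. z > 0 \<Longrightarrow>
        \<sigma> (n + 1) z * \<sigma> (n - 1) z =
          sqrt 3 * (z * ((deriv (\<sigma> n) z)^2 - \<sigma> n z * deriv (deriv (\<sigma> n)) z)
                    - \<sigma> n z * deriv (\<sigma> n) z)"
      and S0: "\<And>z. z > 0 \<Longrightarrow> \<sigma> 0 z = tau 0 z"
      and S1: "\<And>z. z > 0 \<Longrightarrow> \<sigma> 1 z = tau 1 z"
  shows "\<And>n z. z > 0 \<Longrightarrow> \<sigma> n z = tau n z"
proof -
  define S where "S n \<longleftrightarrow> (\<forall>z>0. \<sigma> n z = tau n z)" for n
  have cs: "isCont (\<sigma> n) z" if "z > 0" for n z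
    using differentiable_imp_continuous_within[OF diff[OF that]] by simp
  have Feq: "sqrt 3 * (z * ((deriv (\<sigma> n) z)^2 - \<sigma> n z * deriv (deriv (\<sigma> n)) z) - \<sigma> n z * deriv (\<sigma> n) z)
     = sqrt 3 * (z * ((deriv (tau n) z)^2 - tau n z * deriv (deriv (tau n)) z) - tau n z * deriv (tau n) z)"
    if Sn: "S n" and z: "z > 0" for n z
  proof -
    have e0: "\<And>y. y > 0 \<Longrightarrow> \<sigma> n y = tau n y" using Sn unfolding S_def by blast
    have e1: "\<And>y. y > 0 \<Longrightarrow> deriv (\<sigma> n) y = deriv (tau n) y"
    proof -
      fix y :: real assume "y > 0"
      then show "deriv (\<sigma> n) y = deriv (tau n) y" using deriv_eq_pos[of "\<sigma> n" "tau n" y] e0 by blast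
    qed
    have e2: "deriv (deriv (\<sigma> n)) z = deriv (deriv (tau n)) z"
      using deriv_eq_pos[of "deriv (\<sigma> n)" "deriv (tau n)" z] e1 z by blast
    show ?thesis by (simp only: e0[OF z] e1[OF z] e2)
  qed
  have up: "S (n+1)" if h1: "S n" and h2: "S (n-1)" for n
    unfolding S_def
  proof (intro allI impI)
    fix z :: real assume z: "z > 0"
    show "\<sigma> (n+1) z = tau (n+1) z"
    proof (rule eq_cofinite[OF tau_zero_finite[of "n-1"] z _ cs[OF z] tau_cont[OF z]])
      fix y :: real assume y: "y > 0" "y \<notin> {z. z > 0 \<and> tau (n-1) z = 0}"
      then have t0: "tau (n-1) y \<noteq> 0" by auto
      have sm: "\<sigma> (n-1) y = tau (n-1) y" using h2 y(1) unfolding S_def by blast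
      have "\<sigma> (n+1) y * tau (n-1) y = \<sigma> (n+1) y * \<sigma> (n-1) y" by (simp only: sm)
      also have "\<dots> = tau (n+1) y * tau (n-1) y"
        by (simp only: rec[OF y(1), of n] Feq[OF h1 y(1)] tau_rec[OF y(1), of n])
      finally show "\<sigma> (n+1) y = tau (n+1) y" using t0 by simp
    qed
  qed
  have down: "S (n-1)" if h1: "S n" and h2: "S (n+1)" for n
    unfolding S_def
  proof (intro allI impI)
    fix z :: real assume z: "z > 0"
    show "\<sigma> (n-1) z = tau (n-1) z"
    proof (rule eq_cofinite[OF tau_zero_finite[of "n+1"] z _ cs[OF z] tau_cont[OF z]])
      fix y :: real assume y: "y > 0" "y \<notin> {z. z > 0 \<and> tau (n+1) z = 0}"
      then have t0: "tau (n+1) y \<noteq> 0" by auto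
      have sm: "\<sigma> (n+1) y = tau (n+1) y" using h2 y(1) unfolding S_def by blast
      have "tau (n+1) y * \<sigma> (n-1) y = \<sigma> (n+1) y * \<sigma> (n-1) y" by (simp only: sm)
      also have "\<dots> = tau (n+1) y * tau (n-1) y"
        by (simp only: rec[OF y(1), of n] Feq[OF h1 y(1)] tau_rec[OF y(1), of n])
      finally show "\<sigma> (n-1) y = tau (n-1) y" using t0 by simp
    qed
  qed
  have s0: "S 0" "S 1" unfolding S_def using S0 S1 by auto
  have pos: "S (int m) \<and> S (int m + 1)" for m
  proof (induction m)
    case 0 then show ?case using s0 by simp
  next
    case (Suc m)
    then have "S (int m + 1 + 1)" using up[of "int m + 1"] by simp
    then show ?case using Suc by (simp add: add.commute)
  qed
  have neg: "S (- int m) \<and> S (- int m + 1)" for m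
  proof (induction m)
    case 0 then show ?case using s0 by simp
  next
    case (Suc m)
    then have h: "S (- int m - 1)" using down[of "- int m"] by simp
    have q1: "- int (Suc m) = - int m - 1" and q2: "- int (Suc m) + 1 = - int m" by simp_all
    show ?case unfolding q1 q2 using h Suc by simp
  qed
  have all: "S n" for n
  proof (cases "n \<ge> 0")
    case True
    then have "n = int (nat n)" by simp
    then show ?thesis using pos[of "nat n"] by metis
  next
    case False
    then have "n = - int (nat (-n))" by simp
    then show ?thesis using neg[of "nat (-n)"] by metis
  qed
  fix n z assume "z > (0::real)"
  then show "\<sigma> n z = tau n z" using all[of n] unfolding S_def by blast
qed

theorem mainTheorem7:
  fixes \<sigma> :: "int \<Rightarrow> real \<Rightarrow> real"
  assumes diff: "\<And>n z. z > 0 \<Longrightarrow> \<sigma> n differentiable (at z)"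
      and diff2: "\<And>n z. z > 0 \<Longrightarrow> deriv (\<sigma> n) differentiable (at z)"
      and rec: "\<And>n z. z > 0 \<Longrightarrow>
        \<sigma> (n + 1) z * \<sigma> (n - 1) z =
          sqrt 3 * (z * ((deriv (\<sigma> n) z)^2 - \<sigma> n z * deriv (deriv (\<sigma> n)) z)
                    - \<sigma> n z * deriv (\<sigma> n) z)"
      and init0: "\<And>z. z > 0 \<Longrightarrow>
        \<sigma> 0 z = ((z/2) powr (1/3)) powr (-5/24) * exp (- 9/8 * ((z/2) powr (1/3))^4)"
      and init1: "\<And>z. z > 0 \<Longrightarrow>
        \<sigma> 1 z = 3 powr (1/4) * ((z/2) powr (1/3)) powr (7/24)
                  * exp (- 9/8 * ((z/2) powr (1/3))^4 - 3/2 * ((z/2) powr (1/3))^2)"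
  shows "\<And>n z. z > 0 \<Longrightarrow>
    \<sigma> n z = (let \<zeta> = (z/2) powr (1/3) in
      (if odd n
       then 3 powr (1/4) * \<zeta> powr (7/24)
              * exp (- 9/8 * \<zeta>^4 - 3/2 * of_int n * \<zeta>^2) * poly (ohyama n) (3 * \<zeta>^2)
       else \<zeta> powr (-5/24)
              * exp (- 9/8 * \<zeta>^4 - 3/2 * of_int n * \<zeta>^2) * poly (ohyama n) (3 * \<zeta>^2)))"
proof -
  have o0: "ohyama 0 = 1" "ohyama 1 = 1" by (simp_all add: ohyama_sq)
  have S0: "\<And>z. z > 0 \<Longrightarrow> \<sigma> 0 z = tau 0 z"
    using init0 unfolding tau_formula Let_def by (simp add: o0)
  have S1: "\<And>z. z > 0 \<Longrightarrow> \<sigma> 1 z = tau 1 z"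
    using init1 unfolding tau_formula Let_def by (simp add: o0)
  fix n z assume z: "z > (0::real)"
  show "\<sigma> n z = (let \<zeta> = (z/2) powr (1/3) in
      (if odd n
       then 3 powr (1/4) * \<zeta> powr (7/24)
              * exp (- 9/8 * \<zeta>^4 - 3/2 * of_int n * \<zeta>^2) * poly (ohyama n) (3 * \<zeta>^2)
       else \<zeta> powr (-5/24)
              * exp (- 9/8 * \<zeta>^4 - 3/2 * of_int n * \<zeta>^2) * poly (ohyama n) (3 * \<zeta>^2)))"
    using main_unique[OF diff rec S0 S1 z] unfolding tau_formula .
qed


end
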